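(* For every (nonempty) composition $\alpha$, the fundamental quasi-symmetric function $L_\alpha$ is irreducible both in $\mathrm{QSym}$ and in $K=\mathbb Z[[x_1,x_2,\dots]]$ (power series of bounded degree).
   Context: For a composition $\alpha=(\alpha_1,\dots,\alpha_k)$ of $n$ (positive integers), $D(\alpha)=\{\alpha_1,\dots,\alpha_1+\dots+\alpha_{k-1}\}\subseteq[n-1]$, $M_\beta=\sum_{i_1<\dots<i_l}x_{i_1}^{\beta_1}\cdots x_{i_l}^{\beta_l}$, and $L_\alpha=\sum_{|\beta|=n,\,D(\beta)\subseteq D(\alpha)}M_\beta$. $\mathrm{QSym}\subseteq K$ is the ring of quasi-symmetric functions (bounded-degree series whose coefficient of $x_{i_1}^{a_1}\cdots x_{i_k}^{a_k}$ depends only on $(a_1,\dots,a_k)$ for $i_1<\dots<i_k$). The units of $K$ and $\mathrm{QSym}$ are $\pm1$. *)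

theory Defs
  imports "HOL-Algebra.Ring_Divisibility" "HOL-Library.Poly_Mapping"
begin

(* Monomials x_1^{e_1} x_2^{e_2} ... are finitely supported exponent vectors nat \<Rightarrow>\<^sub>0 nat.
   An element of K = Z[[x_1,x_2,...]] (bounded degree) is a coefficient function
   (nat \<Rightarrow>\<^sub>0 nat) \<Rightarrow> int whose support has bounded total degree. *)

type_synonym monom = "nat \<Rightarrow>\<^sub>0 nat"
type_synonym series = "monom \<Rightarrow> int"

definition mdeg :: "monom \<Rightarrow> nat" where
  "mdeg m = (\<Sum>i\<in>Poly_Mapping.keys m. Poly_Mapping.lookup m i)"

definition bounded_degree :: "series \<Rightarrow> bool" where
  "bounded_degree f \<longleftrightarrow> (\<exists>d. \<forall>m. f m \<noteq> 0 \<longrightarrow> mdeg m \<le> d)"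

definition Kmult :: "series \<Rightarrow> series \<Rightarrow> series" where
  "Kmult f g = (\<lambda>m. \<Sum>(a, b)\<in>{(a, b). a + b = m}. f a * g b)"

definition Kone :: series where
  "Kone = (\<lambda>m. if m = 0 then 1 else 0)"

definition K_ring :: "series ring" where
  "K_ring = \<lparr> carrier = {f. bounded_degree f}, monoid.mult = Kmult, one = Kone,
              zero = (\<lambda>_. 0), add = (\<lambda>f g m. f m + g m) \<rparr>"

(* The exponent pattern (a_1,...,a_k) of x_{i_1}^{a_1}...x_{i_k}^{a_k}, i_1<...<i_k, a_j>0 *)
definition pattern :: "monom \<Rightarrow> nat list" where
  "pattern m = map (Poly_Mapping.lookup m) (sorted_list_of_set (Poly_Mapping.keys m))"

definition quasi_symmetric :: "series \<Rightarrow> bool" where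
  "quasi_symmetric f \<longleftrightarrow> bounded_degree f \<and>
     (\<forall>m m'. pattern m = pattern m' \<longrightarrow> f m = f m')"

definition QSym_ring :: "series ring" where
  "QSym_ring = K_ring\<lparr> carrier := {f. quasi_symmetric f} \<rparr>"

definition composition :: "nat list \<Rightarrow> bool" where
  "composition \<alpha> \<longleftrightarrow> \<alpha> \<noteq> [] \<and> (\<forall>a\<in>set \<alpha>. 0 < a)"

definition descents :: "nat list \<Rightarrow> nat set" where
  "descents \<alpha> = {sum_list (take j \<alpha>) | j. 1 \<le> j \<and> j < length \<alpha>}"

definition M_qs :: "nat list \<Rightarrow> series" where
  "M_qs \<beta> = (\<lambda>m. if pattern m = \<beta> then 1 else 0)"

definition L_qs :: "nat list \<Rightarrow> series" where
  "L_qs \<alpha> = (\<lambda>m. \<Sum>\<beta>\<in>{\<beta>. composition \<beta> \<and> sum_list \<beta> = sum_list \<alpha>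
                                  \<and> descents \<beta> \<subseteq> descents \<alpha>}. M_qs \<beta> m)"

end

theory Submission
  imports Defs "HOL-Computational_Algebra.Polynomial" "HOL-Computational_Algebra.Primes"
begin

definition Mon :: "nat set \<Rightarrow> nat \<Rightarrow> monom set" where
  "Mon V D = {m. Poly_Mapping.keys m \<subseteq> V \<and> mdeg m \<le> D}"

definition cst :: "int \<Rightarrow> series" where
  "cst u = (\<lambda>m. if m = 0 then u else 0)"

lemma mdeg_superset:
  assumes "finite A" "Poly_Mapping.keys m \<subseteq> A"
  shows "mdeg m = (\<Sum>i\<in>A. Poly_Mapping.lookup m i)"
  unfolding mdeg_def
  by (rule sum.mono_neutral_left) (use assms in \<open>auto simp: in_keys_iff\<close>)

lemma keys_add_nat: "Poly_Mapping.keys (a + b) = Poly_Mapping.keys a \<union> Poly_Mapping.keys (b::monom)"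
  by (auto simp: in_keys_iff lookup_add)

lemma mdeg_add: "mdeg (a + b) = mdeg a + mdeg b"
proof -
  have f: "finite (Poly_Mapping.keys a \<union> Poly_Mapping.keys b)" by simp
  show ?thesis
    using mdeg_superset[OF f, of "a+b"] mdeg_superset[OF f, of a] mdeg_superset[OF f, of b]
    by (simp add: keys_add_nat lookup_add sum.distrib)
qed

lemma mdeg_single: "mdeg (Poly_Mapping.single i k) = k"
  by (simp add: mdeg_def)

lemma mdeg_zero [simp]: "mdeg 0 = 0"
  by (simp add: mdeg_def)

lemma mdeg_eq_0_iff: "mdeg m = 0 \<longleftrightarrow> m = 0"
  unfolding mdeg_def
  by (auto simp: in_keys_iff intro: poly_mapping_eqI)

lemma lookup_le_mdeg: "Poly_Mapping.lookup m i \<le> mdeg m"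
proof (cases "i \<in> Poly_Mapping.keys m")
  case True
  then show ?thesis unfolding mdeg_def
    by (intro member_le_sum) auto
qed (simp add: in_keys_iff)

lemma finite_Mon:
  assumes "finite V"
  shows "finite (Mon V D)"
proof -
  have "inj_on (\<lambda>m. restrict (Poly_Mapping.lookup m) V) (Mon V D)"
  proof (rule inj_onI)
    fix x y assume x: "x \<in> Mon V D" and y: "y \<in> Mon V D"
      and e: "restrict (Poly_Mapping.lookup x) V = restrict (Poly_Mapping.lookup y) V"
    show "x = y"
    proof (rule poly_mapping_eqI)
      fix k show "Poly_Mapping.lookup x k = Poly_Mapping.lookup y k"
      proof (cases "k \<in> V")
        case True then show ?thesis using e by (metis restrict_apply')
      next
        case False
        then have "k \<notin> Poly_Mapping.keys x" "k \<notin> Poly_Mapping.keys y"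
          using x y unfolding Mon_def by blast+
        then show ?thesis by (simp add: in_keys_iff)
      qed
    qed
  qed
  moreover have "(\<lambda>m. restrict (Poly_Mapping.lookup m) V) ` Mon V D \<subseteq> PiE V (\<lambda>_. {0..D})"
  proof
    fix f assume "f \<in> (\<lambda>m. restrict (Poly_Mapping.lookup m) V) ` Mon V D"
    then obtain m where m: "m \<in> Mon V D" "f = restrict (Poly_Mapping.lookup m) V" by blast
    have "\<And>i. Poly_Mapping.lookup m i \<le> D"
      using m(1) lookup_le_mdeg order_trans unfolding Mon_def by blast
    then show "f \<in> PiE V (\<lambda>_. {0..D})" unfolding m(2) by (simp add: PiE_iff)
  qed
  moreover have "finite (PiE V (\<lambda>_. {0..D}))"
    using assms by (simp add: finite_PiE)
  ultimately show ?thesis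
    using finite_imageD finite_subset by blast
qed

lemma keys_le_add: "Poly_Mapping.keys a \<subseteq> Poly_Mapping.keys (a + (b::monom))"
  by (simp add: keys_add_nat)

lemma split_finite: "finite {(a, b). a + b = (m::monom)}"
proof -
  have "{(a, b). a + b = m} \<subseteq> Mon (Poly_Mapping.keys m) (mdeg m) \<times> Mon (Poly_Mapping.keys m) (mdeg m)"
    by (auto simp: Mon_def keys_add_nat mdeg_add)
  moreover have "finite (Mon (Poly_Mapping.keys m) (mdeg m) \<times> Mon (Poly_Mapping.keys m) (mdeg m))"
    by (simp add: finite_Mon)
  ultimately show ?thesis by (rule finite_subset)
qed

lemma Kmult_single_term:
  assumes "u0 + v0 = w"
    and "\<And>u v. u + v = w \<Longrightarrow> b u \<noteq> 0 \<Longrightarrow> c v \<noteq> 0 \<Longrightarrow> u = u0 \<and> v = v0"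
  shows "Kmult b c w = b u0 * c v0"
proof -
  have "Kmult b c w = (\<Sum>x\<in>{(a, b). a + b = w}. (case x of (a, bb) \<Rightarrow> b a * c bb))"
    by (simp add: Kmult_def)
  also have "\<dots> = (case (u0, v0) of (a, bb) \<Rightarrow> b a * c bb)
      + (\<Sum>x\<in>{(a, b). a + b = w} - {(u0,v0)}. (case x of (a, bb) \<Rightarrow> b a * c bb))"
    using assms(1) by (intro sum.remove) (auto simp: split_finite)
  also have "(\<Sum>x\<in>{(a, b). a + b = w} - {(u0,v0)}. (case x of (a, bb) \<Rightarrow> b a * c bb)) = 0"
  proof (rule sum.neutral, rule ballI)
    fix x assume "x \<in> {(a, b). a + b = w} - {(u0,v0)}"
    then show "(case x of (a, bb) \<Rightarrow> b a * c bb) = 0"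
      using assms(2) by (cases x) auto
  qed
  finally show ?thesis by simp
qed

lemma Kmult_extremal:
  fixes b c :: series
  assumes V: "finite V"
    and P: "P = {u. b u \<noteq> 0 \<and> mdeg u = d0 \<and> Poly_Mapping.keys u \<subseteq> V}" "P \<noteq> {}"
    and Q: "Q = {v. c v \<noteq> 0 \<and> mdeg v = e0 \<and> Poly_Mapping.keys v \<subseteq> V}" "Q \<noteq> {}"
    and ext: "\<And>u v. b u \<noteq> 0 \<Longrightarrow> c v \<noteq> 0 \<Longrightarrow> mdeg u + mdeg v = d0 + e0 \<Longrightarrow> mdeg u = d0"
  shows "Kmult b c (Max P + Max Q) \<noteq> 0 \<and> mdeg (Max P + Max Q) = d0 + e0"
proof -
  have fP: "finite P"
    by (rule finite_subset[OF _ finite_Mon[OF V, of d0]]) (auto simp: P Mon_def)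
  have fQ: "finite Q"
    by (rule finite_subset[OF _ finite_Mon[OF V, of e0]]) (auto simp: Q Mon_def)
  define u0 where "u0 = Max P"
  define v0 where "v0 = Max Q"
  have u0: "u0 \<in> P" unfolding u0_def using fP P(2) by (rule Max_in)
  have v0: "v0 \<in> Q" unfolding v0_def using fQ Q(2) by (rule Max_in)
  have deg: "mdeg (u0 + v0) = d0 + e0"
    using u0 v0 by (simp add: P Q mdeg_add)
  have "Kmult b c (u0 + v0) = b u0 * c v0"
  proof (rule Kmult_single_term)
    fix u v assume uv: "u + v = u0 + v0" and bu: "b u \<noteq> 0" and cv: "c v \<noteq> 0"
    have "mdeg u + mdeg v = mdeg (u0 + v0)" using uv by (metis mdeg_add)
    then have "mdeg u + mdeg v = d0 + e0" using deg by simp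
    then have du: "mdeg u = d0" and dv: "mdeg v = e0" using ext[OF bu cv] by auto
    have kw: "Poly_Mapping.keys (u0 + v0) \<subseteq> V"
      using u0 v0 by (auto simp: P Q keys_add_nat)
    have "Poly_Mapping.keys u \<union> Poly_Mapping.keys v = Poly_Mapping.keys (u0 + v0)"
      using uv keys_add_nat by metis
    then have "Poly_Mapping.keys u \<subseteq> V" "Poly_Mapping.keys v \<subseteq> V"
      using kw by blast+
    then have uP: "u \<in> P" and vQ: "v \<in> Q" using bu cv du dv by (auto simp: P Q)
    have ule: "u \<le> u0" unfolding u0_def using fP uP by (rule Max_ge)
    have vle: "v \<le> v0" unfolding v0_def using fQ vQ by (rule Max_ge)
    have "u = u0"
    proof (rule ccontr)
      assume "u \<noteq> u0"
      then have "u < u0" using ule by simp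
      then have "u + v < u0 + v" by (rule add_strict_right_mono)
      also have "\<dots> \<le> u0 + v0" using vle by (rule add_left_mono)
      finally show False using uv by simp
    qed
    moreover then have "v = v0" using uv by simp
    ultimately show "u = u0 \<and> v = v0" by simp
  qed simp
  moreover have "b u0 * c v0 \<noteq> 0" using u0 v0 by (simp add: P Q)
  ultimately show ?thesis using deg by (simp add: u0_def v0_def)
qed

lemma nonzero_bounded_degs:
  assumes "bounded_degree b" "b \<noteq> (\<lambda>_. 0)"
  shows "finite {mdeg m | m. b m \<noteq> 0}" "{mdeg m | m. b m \<noteq> 0} \<noteq> {}"
proof -
  obtain D where D: "\<And>m. b m \<noteq> 0 \<Longrightarrow> mdeg m \<le> D" using assms(1) unfolding bounded_degree_def by blast
  show "finite {mdeg m | m. b m \<noteq> 0}"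
    by (rule finite_subset[of _ "{0..D}"]) (auto dest: D)
  show "{mdeg m | m. b m \<noteq> 0} \<noteq> {}" using assms(2) by auto
qed

lemma Kmult_zero_left: "Kmult (\<lambda>_. 0) c = (\<lambda>_. 0)"
  by (simp add: Kmult_def)

lemma Kmult_zero_right: "Kmult b (\<lambda>_. 0) = (\<lambda>_. 0)"
  by (simp add: Kmult_def)

lemma homog_factors:
  assumes bb: "bounded_degree b" and bc: "bounded_degree c"
    and prod: "Kmult b c = L" and hom: "\<And>m. L m \<noteq> 0 \<Longrightarrow> mdeg m = n"
    and nz: "L \<noteq> (\<lambda>_. 0)"
  shows "\<exists>d e. d + e = n \<and> (\<forall>m. b m \<noteq> 0 \<longrightarrow> mdeg m = d) \<and> (\<forall>m. c m \<noteq> 0 \<longrightarrow> mdeg m = e)"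
proof -
  have b0: "b \<noteq> (\<lambda>_. 0)"
  proof
    assume "b = (\<lambda>_. 0)"
    then have "L = (\<lambda>_. 0)" using prod Kmult_zero_left by simp
    with nz show False by simp
  qed
  have c0: "c \<noteq> (\<lambda>_. 0)"
  proof
    assume "c = (\<lambda>_. 0)"
    then have "L = (\<lambda>_. 0)" using prod Kmult_zero_right by simp
    with nz show False by simp
  qed
  define DB where "DB = {mdeg m | m. b m \<noteq> 0}"
  define DC where "DC = {mdeg m | m. c m \<noteq> 0}"
  have fDB: "finite DB" "DB \<noteq> {}" using nonzero_bounded_degs[OF bb b0] by (auto simp: DB_def)
  have fDC: "finite DC" "DC \<noteq> {}" using nonzero_bounded_degs[OF bc c0] by (auto simp: DC_def)
  define d0 where "d0 = Min DB"
  define d1 where "d1 = Max DB"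
  define e0 where "e0 = Min DC"
  define e1 where "e1 = Max DC"
  have d0le: "\<And>m. b m \<noteq> 0 \<Longrightarrow> d0 \<le> mdeg m"
  proof -
    fix m assume "b m \<noteq> 0"
    then have "mdeg m \<in> DB" by (auto simp: DB_def)
    then show "d0 \<le> mdeg m" unfolding d0_def by (rule Min_le[OF fDB(1)])
  qed
  have d1ge: "\<And>m. b m \<noteq> 0 \<Longrightarrow> mdeg m \<le> d1"
  proof -
    fix m assume "b m \<noteq> 0"
    then have "mdeg m \<in> DB" by (auto simp: DB_def)
    then show "mdeg m \<le> d1" unfolding d1_def by (rule Max_ge[OF fDB(1)])
  qed
  have e0le: "\<And>m. c m \<noteq> 0 \<Longrightarrow> e0 \<le> mdeg m"
  proof -
    fix m assume "c m \<noteq> 0"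
    then have "mdeg m \<in> DC" by (auto simp: DC_def)
    then show "e0 \<le> mdeg m" unfolding e0_def by (rule Min_le[OF fDC(1)])
  qed
  have e1ge: "\<And>m. c m \<noteq> 0 \<Longrightarrow> mdeg m \<le> e1"
  proof -
    fix m assume "c m \<noteq> 0"
    then have "mdeg m \<in> DC" by (auto simp: DC_def)
    then show "mdeg m \<le> e1" unfolding e1_def by (rule Max_ge[OF fDC(1)])
  qed
  obtain u0 where u0: "b u0 \<noteq> 0" "mdeg u0 = d0"
    using Min_in[OF fDB] unfolding d0_def DB_def by auto
  obtain u1 where u1: "b u1 \<noteq> 0" "mdeg u1 = d1"
    using Max_in[OF fDB] unfolding d1_def DB_def by auto
  obtain v0 where v0: "c v0 \<noteq> 0" "mdeg v0 = e0"
    using Min_in[OF fDC] unfolding e0_def DC_def by auto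
  obtain v1 where v1: "c v1 \<noteq> 0" "mdeg v1 = e1"
    using Max_in[OF fDC] unfolding e1_def DC_def by auto
  have low: "d0 + e0 = n"
  proof -
    define V where "V = Poly_Mapping.keys u0 \<union> Poly_Mapping.keys v0"
    have fV: "finite V" by (simp add: V_def)
    have "u0 \<in> {u. b u \<noteq> 0 \<and> mdeg u = d0 \<and> Poly_Mapping.keys u \<subseteq> V}"
      using u0 by (simp add: V_def)
    then have Pne: "{u. b u \<noteq> 0 \<and> mdeg u = d0 \<and> Poly_Mapping.keys u \<subseteq> V} \<noteq> {}" by blast
    have "v0 \<in> {v. c v \<noteq> 0 \<and> mdeg v = e0 \<and> Poly_Mapping.keys v \<subseteq> V}"
      using v0 by (simp add: V_def)
    then have Qne: "{v. c v \<noteq> 0 \<and> mdeg v = e0 \<and> Poly_Mapping.keys v \<subseteq> V} \<noteq> {}" by blast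
    have extr: "mdeg u = d0" if "b u \<noteq> 0" "c v \<noteq> 0" "mdeg u + mdeg v = d0 + e0" for u v
      using d0le[OF that(1)] e0le[OF that(2)] that(3) by linarith
    obtain w where w: "Kmult b c w \<noteq> 0" "mdeg w = d0 + e0"
      using Kmult_extremal[OF fV refl Pne refl Qne] extr by blast
    have "L w \<noteq> 0" using w(1) prod by simp
    then have "mdeg w = n" by (rule hom)
    then show ?thesis using w(2) by simp
  qed
  have high: "d1 + e1 = n"
  proof -
    define V where "V = Poly_Mapping.keys u1 \<union> Poly_Mapping.keys v1"
    have fV: "finite V" by (simp add: V_def)
    have "u1 \<in> {u. b u \<noteq> 0 \<and> mdeg u = d1 \<and> Poly_Mapping.keys u \<subseteq> V}"
      using u1 by (simp add: V_def)
    then have Pne: "{u. b u \<noteq> 0 \<and> mdeg u = d1 \<and> Poly_Mapping.keys u \<subseteq> V} \<noteq> {}" by blast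
    have "v1 \<in> {v. c v \<noteq> 0 \<and> mdeg v = e1 \<and> Poly_Mapping.keys v \<subseteq> V}"
      using v1 by (simp add: V_def)
    then have Qne: "{v. c v \<noteq> 0 \<and> mdeg v = e1 \<and> Poly_Mapping.keys v \<subseteq> V} \<noteq> {}" by blast
    have extr: "mdeg u = d1" if "b u \<noteq> 0" "c v \<noteq> 0" "mdeg u + mdeg v = d1 + e1" for u v
      using d1ge[OF that(1)] e1ge[OF that(2)] that(3) by linarith
    obtain w where w: "Kmult b c w \<noteq> 0" "mdeg w = d1 + e1"
      using Kmult_extremal[OF fV refl Pne refl Qne] extr by blast
    have "L w \<noteq> 0" using w(1) prod by simp
    then have "mdeg w = n" by (rule hom)
    then show ?thesis using w(2) by simp
  qed
  have "d0 \<le> d1" using d0le[OF u0(1)] d1ge[OF u0(1)] by linarith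
  moreover have "e0 \<le> e1" using e0le[OF v0(1)] e1ge[OF v0(1)] by linarith
  ultimately have "d0 = d1" "e0 = e1" using low high by linarith+
  then show ?thesis using low d0le d1ge e0le e1ge
    by (intro exI[of _ d0] exI[of _ e0]) (auto intro: antisym)
qed

lemma keys_sub_single:
  assumes "Poly_Mapping.keys u \<subseteq> {i}"
  shows "u = Poly_Mapping.single i (mdeg u)"
proof (rule poly_mapping_eqI)
  fix k
  have md: "mdeg u = Poly_Mapping.lookup u i"
    using mdeg_superset[of "{i}" u] assms by simp
  show "Poly_Mapping.lookup u k = Poly_Mapping.lookup (Poly_Mapping.single i (mdeg u)) k"
  proof (cases "k = i")
    case True then show ?thesis using md by simp
  next
    case False
    then have "k \<notin> Poly_Mapping.keys u" using assms by blast
    then show ?thesis using False by (simp add: in_keys_iff lookup_single)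
  qed
qed

lemma coeff_pure:
  assumes hb: "\<forall>m. b m \<noteq> 0 \<longrightarrow> mdeg m = d" and hc: "\<forall>m. c m \<noteq> 0 \<longrightarrow> mdeg m = e"
  shows "Kmult b c (Poly_Mapping.single i (d + e)) = b (Poly_Mapping.single i d) * c (Poly_Mapping.single i e)"
proof (rule Kmult_single_term)
  show "Poly_Mapping.single i d + Poly_Mapping.single i e = Poly_Mapping.single i (d + e)"
    by (simp add: single_add)
  fix u v assume uv: "u + v = Poly_Mapping.single i (d + e)" and bu: "b u \<noteq> 0" and cv: "c v \<noteq> 0"
  have k: "Poly_Mapping.keys u \<union> Poly_Mapping.keys v \<subseteq> {i}"
  proof -
    have "Poly_Mapping.keys u \<union> Poly_Mapping.keys v = Poly_Mapping.keys (Poly_Mapping.single i (d + e))"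
      using uv keys_add_nat[of u v] by simp
    also have "\<dots> \<subseteq> {i}" by simp
    finally show ?thesis .
  qed
  have "u = Poly_Mapping.single i (mdeg u)" using k by (intro keys_sub_single) blast
  moreover have "v = Poly_Mapping.single i (mdeg v)" using k by (intro keys_sub_single) blast
  ultimately show "u = Poly_Mapping.single i d \<and> v = Poly_Mapping.single i e"
    using hb bu hc cv by metis
qed

definition Lp :: "nat list \<Rightarrow> monom \<Rightarrow> bool" where
  "Lp \<alpha> m \<longleftrightarrow> m \<noteq> 0 \<and> mdeg m = sum_list \<alpha> \<and> descents (pattern m) \<subseteq> descents \<alpha>"

lemma pattern_pos: "x \<in> set (pattern m) \<Longrightarrow> 0 < x"
  unfolding pattern_def by (auto simp: in_keys_iff)

lemma sum_list_pattern: "sum_list (pattern m) = mdeg m"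
  unfolding pattern_def mdeg_def
  by (simp add: sum_list_distinct_conv_sum_set)

lemma pattern_Nil_iff: "pattern m = [] \<longleftrightarrow> m = 0"
  unfolding pattern_def by simp

lemma composition_pattern: "composition (pattern m) \<longleftrightarrow> m \<noteq> 0"
  unfolding composition_def using pattern_pos pattern_Nil_iff by blast

lemma length_le_sum_list: "(\<forall>a\<in>set xs. 0 < (a::nat)) \<Longrightarrow> length xs \<le> sum_list xs"
  by (induction xs) auto

lemma finite_compositions: "finite {\<beta>. composition \<beta> \<and> sum_list \<beta> = n}"
proof -
  have "{\<beta>. composition \<beta> \<and> sum_list \<beta> = n} \<subseteq> {xs. set xs \<subseteq> {0..n} \<and> length xs \<le> n}"
  proof
    fix xs assume "xs \<in> {\<beta>. composition \<beta> \<and> sum_list \<beta> = n}"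
    then have c: "composition xs" and s: "sum_list xs = n" by auto
    have "length xs \<le> n" using c s length_le_sum_list unfolding composition_def by metis
    moreover have "set xs \<subseteq> {0..n}" using s member_le_sum_list[of _ xs] by fastforce
    ultimately show "xs \<in> {xs. set xs \<subseteq> {0..n} \<and> length xs \<le> n}" by simp
  qed
  moreover have "finite {xs. set xs \<subseteq> {0..n} \<and> length xs \<le> n}"
    by (rule finite_lists_length_le) simp
  ultimately show ?thesis by (rule finite_subset)
qed

lemma L_qs_eq: "L_qs \<alpha> m = (if Lp \<alpha> m then 1 else 0)"
proof -
  define B where "B = {\<beta>. composition \<beta> \<and> sum_list \<beta> = sum_list \<alpha> \<and> descents \<beta> \<subseteq> descents \<alpha>}"
  have fB: "finite B"
    by (rule finite_subset[OF _ finite_compositions[of "sum_list \<alpha>"]]) (auto simp: B_def)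
  have "L_qs \<alpha> m = (\<Sum>\<beta>\<in>B. if pattern m = \<beta> then 1 else 0)"
    unfolding L_qs_def M_qs_def B_def by simp
  also have "\<dots> = (if pattern m \<in> B then 1 else 0)"
    using fB by simp
  also have "(pattern m \<in> B) = Lp \<alpha> m"
    unfolding B_def Lp_def using composition_pattern sum_list_pattern by auto
  finally show ?thesis .
qed

lemma L_hom: "L_qs \<alpha> m \<noteq> 0 \<Longrightarrow> mdeg m = sum_list \<alpha>"
  by (simp add: L_qs_eq Lp_def split: if_splits)

lemma L_quasi: "quasi_symmetric (L_qs \<alpha>)"
  unfolding quasi_symmetric_def bounded_degree_def
proof (intro conjI allI impI)
  show "\<exists>d. \<forall>m. L_qs \<alpha> m \<noteq> 0 \<longrightarrow> mdeg m \<le> d"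
    using L_hom by (intro exI[of _ "sum_list \<alpha>"]) auto
  fix m m' :: monom assume "pattern m = pattern m'"
  then show "L_qs \<alpha> m = L_qs \<alpha> m'" unfolding L_qs_def M_qs_def by simp
qed

definition spec :: "nat set \<Rightarrow> nat \<Rightarrow> series \<Rightarrow> int poly" where
  "spec V D f = (\<Sum>m\<in>Mon V D. monom (f m) (Poly_Mapping.lookup m 0))"

lemma spec_mult:
  assumes V: "finite V"
    and hb: "\<And>m. b m \<noteq> 0 \<Longrightarrow> mdeg m \<le> D1" and hc: "\<And>m. c m \<noteq> 0 \<Longrightarrow> mdeg m \<le> D2"
  shows "spec V (D1 + D2) (Kmult b c) = spec V D1 b * spec V D2 c"
proof -
  define g where "g = (\<lambda>(u::monom, v::monom). monom (b u * c v) (Poly_Mapping.lookup u 0 + Poly_Mapping.lookup v 0))"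
  define M12 where "M12 = Mon V (D1 + D2)"
  define A where "A = (\<Union>m\<in>M12. {(u, v). u + v = m})"
  have fM12: "finite M12" unfolding M12_def using V by (rule finite_Mon)
  have AS: "A \<subseteq> M12 \<times> M12"
    unfolding A_def M12_def Mon_def by (auto simp: keys_add_nat mdeg_add)
  have fA: "finite A" using AS fM12 by (meson finite_SigmaI finite_subset)
  have "spec V (D1 + D2) (Kmult b c)
      = (\<Sum>m\<in>M12. monom (\<Sum>x\<in>{(u, v). u + v = m}. case x of (u, v) \<Rightarrow> b u * c v) (Poly_Mapping.lookup m 0))"
    unfolding spec_def M12_def Kmult_def by simp
  also have "\<dots> = (\<Sum>m\<in>M12. \<Sum>x\<in>{(u, v). u + v = m}. g x)"
  proof (rule sum.cong[OF refl])
    fix m assume "m \<in> M12"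
    have "monom (\<Sum>x\<in>{(u, v). u + v = m}. case x of (u, v) \<Rightarrow> b u * c v) (Poly_Mapping.lookup m 0)
        = (\<Sum>x\<in>{(u, v). u + v = m}. monom (case x of (u, v) \<Rightarrow> b u * c v) (Poly_Mapping.lookup m 0))"
      by (rule monom_sum)
    also have "\<dots> = (\<Sum>x\<in>{(u, v). u + v = m}. g x)"
      by (rule sum.cong[OF refl]) (auto simp: g_def lookup_add)
    finally show "monom (\<Sum>x\<in>{(u, v). u + v = m}. case x of (u, v) \<Rightarrow> b u * c v) (Poly_Mapping.lookup m 0)
        = (\<Sum>x\<in>{(u, v). u + v = m}. g x)" .
  qed
  also have "\<dots> = (\<Sum>x\<in>A. g x)"
    unfolding A_def
    by (rule sum.UNION_disjoint[symmetric]) (use fM12 split_finite in auto)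
  also have "\<dots> = (\<Sum>x\<in>Mon V D1 \<times> Mon V D2. g x)"
  proof (rule sum.mono_neutral_right[OF fA])
    show "Mon V D1 \<times> Mon V D2 \<subseteq> A"
      unfolding A_def M12_def Mon_def by (auto simp: keys_add_nat mdeg_add)
    show "\<forall>x\<in>A - Mon V D1 \<times> Mon V D2. g x = 0"
    proof
      fix x assume x: "x \<in> A - Mon V D1 \<times> Mon V D2"
      obtain u v where xuv: "x = (u, v)" by (cases x)
      have "u + v \<in> M12" using x xuv unfolding A_def by auto
      then have k: "Poly_Mapping.keys u \<subseteq> V" "Poly_Mapping.keys v \<subseteq> V"
        unfolding M12_def Mon_def by (auto simp: keys_add_nat)
      have "u \<notin> Mon V D1 \<or> v \<notin> Mon V D2" using x xuv by auto
      then have "mdeg u > D1 \<or> mdeg v > D2" using k unfolding Mon_def by auto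
      then have "b u = 0 \<or> c v = 0" using hb hc by force
      then show "g x = 0" unfolding g_def xuv by auto
    qed
  qed
  also have "\<dots> = (\<Sum>u\<in>Mon V D1. \<Sum>v\<in>Mon V D2. g (u, v))"
    by (simp add: sum.cartesian_product split_def)
  also have "\<dots> = spec V D1 b * spec V D2 c"
    unfolding spec_def sum_product g_def by (simp add: mult_monom)
  finally show ?thesis .
qed

lemma coeff_spec:
  assumes "finite V"
  shows "coeff (spec V D f) k = (\<Sum>m\<in>{m\<in>Mon V D. Poly_Mapping.lookup m 0 = k}. f m)"
  unfolding spec_def coeff_sum using finite_Mon[OF assms] by (simp add: sum.inter_filter)

abbreviation ps :: "nat list \<Rightarrow> nat \<Rightarrow> nat" where
  "ps \<beta> i \<equiv> sum_list (take i \<beta>)"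

lemma sum_list_pos: "xs \<noteq> [] \<Longrightarrow> (\<forall>a\<in>set xs. 0 < (a::nat)) \<Longrightarrow> 0 < sum_list xs"
  by (cases xs) auto

lemma ps_strict:
  assumes c: "composition \<beta>" and ij: "i < j" "j \<le> length \<beta>"
  shows "ps \<beta> i < ps \<beta> j"
proof -
  have "take j \<beta> = take i \<beta> @ take (j - i) (drop i \<beta>)"
    using ij by (metis le_add_diff_inverse less_imp_le take_add)
  then have e: "ps \<beta> j = ps \<beta> i + sum_list (take (j - i) (drop i \<beta>))" by simp
  have ne: "take (j - i) (drop i \<beta>) \<noteq> []" using ij by simp
  have "\<forall>a\<in>set (take (j - i) (drop i \<beta>)). 0 < a"
    using c unfolding composition_def by (meson in_set_dropD in_set_takeD)
  then have "0 < sum_list (take (j - i) (drop i \<beta>))" using ne by (rule sum_list_pos[rotated])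
  then show ?thesis using e by simp
qed

lemma ps_mono:
  assumes c: "composition \<beta>" and ij: "i \<le> j" "j \<le> length \<beta>"
  shows "ps \<beta> i \<le> ps \<beta> j"
  using ps_strict[OF c] ij by (cases "i = j") (auto intro: less_imp_le)

lemma ps_inj:
  assumes c: "composition \<beta>" and "i \<le> length \<beta>" "j \<le> length \<beta>" "ps \<beta> i = ps \<beta> j"
  shows "i = j"
  using ps_strict[OF c, of i j] ps_strict[OF c, of j i] assms
  by (metis less_irrefl linorder_neqE_nat)

lemma descents_bounds:
  assumes c: "composition \<gamma>" and x: "x \<in> descents \<gamma>"
  shows "0 < x" "x < sum_list \<gamma>"
proof -
  obtain j where j: "x = ps \<gamma> j" "1 \<le> j" "j < length \<gamma>"
    using x unfolding descents_def by blast
  have "ps \<gamma> 0 < ps \<gamma> j" using ps_strict[OF c, of 0 j] j by simp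
  then show "0 < x" using j by simp
  have "ps \<gamma> j < ps \<gamma> (length \<gamma>)" using ps_strict[OF c, of j "length \<gamma>"] j by simp
  then show "x < sum_list \<gamma>" using j by simp
qed

lemma descents_snoc:
  assumes "\<gamma> \<noteq> []"
  shows "descents (\<gamma> @ [j]) = insert (sum_list \<gamma>) (descents \<gamma>)"
proof -
  have "descents (\<gamma> @ [j]) = {ps \<gamma> t | t. 1 \<le> t \<and> t \<le> length \<gamma>}"
    unfolding descents_def
  proof (intro equalityI subsetI)
    fix x assume "x \<in> {ps (\<gamma> @ [j]) t |t. 1 \<le> t \<and> t < length (\<gamma> @ [j])}"
    then obtain t where "x = ps (\<gamma> @ [j]) t" "1 \<le> t" "t < length (\<gamma> @ [j])" by blast
    then show "x \<in> {ps \<gamma> t |t. 1 \<le> t \<and> t \<le> length \<gamma>}" by auto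
  next
    fix x assume "x \<in> {ps \<gamma> t |t. 1 \<le> t \<and> t \<le> length \<gamma>}"
    then obtain t where "x = ps \<gamma> t" "1 \<le> t" "t \<le> length \<gamma>" by blast
    then show "x \<in> {ps (\<gamma> @ [j]) t |t. 1 \<le> t \<and> t < length (\<gamma> @ [j])}"
      by (intro CollectI exI[of _ t]) auto
  qed
  also have "\<dots> = insert (ps \<gamma> (length \<gamma>)) {ps \<gamma> t | t. 1 \<le> t \<and> t < length \<gamma>}"
  proof (intro equalityI subsetI)
    fix x assume "x \<in> {ps \<gamma> t | t. 1 \<le> t \<and> t \<le> length \<gamma>}"
    then obtain t where t: "x = ps \<gamma> t" "1 \<le> t" "t \<le> length \<gamma>" by blast
    then show "x \<in> insert (ps \<gamma> (length \<gamma>)) {ps \<gamma> t | t. 1 \<le> t \<and> t < length \<gamma>}"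
      by (cases "t = length \<gamma>") auto
  next
    fix x assume x: "x \<in> insert (ps \<gamma> (length \<gamma>)) {ps \<gamma> t | t. 1 \<le> t \<and> t < length \<gamma>}"
    show "x \<in> {ps \<gamma> t | t. 1 \<le> t \<and> t \<le> length \<gamma>}"
    proof (cases "x = ps \<gamma> (length \<gamma>)")
      case True
      have "1 \<le> length \<gamma>" using assms by (cases \<gamma>) auto
      then show ?thesis using True by (intro CollectI exI[of _ "length \<gamma>"]) simp
    next
      case False
      then obtain t where t: "x = ps \<gamma> t" "1 \<le> t" "t < length \<gamma>" using x by blast
      then show ?thesis by (intro CollectI exI[of _ t]) simp
    qed
  qed
  also have "\<dots> = insert (sum_list \<gamma>) (descents \<gamma>)"
    unfolding descents_def by simp
  finally show ?thesis .
qed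

lemma descents_single: "descents [j] = {}"
  unfolding descents_def by auto

lemma descents_Cons:
  assumes "\<gamma> \<noteq> []"
  shows "descents (k # \<gamma>) = insert k ((+) k ` descents \<gamma>)"
proof (intro equalityI subsetI)
  fix x assume "x \<in> descents (k # \<gamma>)"
  then obtain t where t: "x = ps (k # \<gamma>) t" "1 \<le> t" "t < length (k # \<gamma>)"
    unfolding descents_def by blast
  then obtain t' where t': "t = Suc t'" by (cases t) auto
  show "x \<in> insert k ((+) k ` descents \<gamma>)"
  proof (cases "t' = 0")
    case True then show ?thesis using t t' by simp
  next
    case False
    then have "ps \<gamma> t' \<in> descents \<gamma>" using t t' unfolding descents_def by auto
    then show ?thesis using t t' by simp
  qed
next
  fix x assume "x \<in> insert k ((+) k ` descents \<gamma>)"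
  then consider "x = k" | y where "y \<in> descents \<gamma>" "x = k + y" by blast
  then show "x \<in> descents (k # \<gamma>)"
  proof cases
    case 1
    then show ?thesis unfolding descents_def using assms
      by (intro CollectI exI[of _ 1]) (auto simp: Suc_le_eq)
  next
    case 2
    then obtain t where t: "y = ps \<gamma> t" "1 \<le> t" "t < length \<gamma>"
      unfolding descents_def by blast
    then show ?thesis unfolding descents_def using 2
      by (intro CollectI exI[of _ "Suc t"]) auto
  qed
qed

lemma descents_take:
  assumes c: "composition \<beta>" and i: "i \<le> length \<beta>"
  shows "descents (take i \<beta>) = {x \<in> descents \<beta>. x < ps \<beta> i}"
proof (intro equalityI subsetI)
  fix x assume "x \<in> descents (take i \<beta>)"
  then obtain t where t: "x = ps (take i \<beta>) t" "1 \<le> t" "t < length (take i \<beta>)"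
    unfolding descents_def by blast
  then have x: "x = ps \<beta> t" "t < i" by (auto simp: min_def split: if_splits)
  have "t < length \<beta>" using x(2) i by simp
  then have "x \<in> descents \<beta>" using t(2) x(1) unfolding descents_def by blast
  moreover have "x < ps \<beta> i" using ps_strict[OF c x(2) i] x(1) by simp
  ultimately show "x \<in> {x \<in> descents \<beta>. x < ps \<beta> i}" by simp
next
  fix x assume x: "x \<in> {x \<in> descents \<beta>. x < ps \<beta> i}"
  then obtain t where t: "x = ps \<beta> t" "1 \<le> t" "t < length \<beta>"
    unfolding descents_def by blast
  have "t < i"
  proof (rule ccontr)
    assume "\<not> t < i"
    then have "ps \<beta> i \<le> ps \<beta> t" using ps_mono[OF c, of i t] t by simp
    then show False using x t by simp
  qed
  then show "x \<in> descents (take i \<beta>)"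
    unfolding descents_def using t i
    by (intro CollectI exI[of _ t]) (auto simp: min_def)
qed

lemma ps_drop: "ps \<beta> (i + t) = ps \<beta> i + ps (drop i \<beta>) t"
  by (simp add: take_add)

lemma descents_drop:
  assumes c: "composition \<beta>" and i: "i \<le> length \<beta>"
  shows "(+) (ps \<beta> i) ` descents (drop i \<beta>) = {x \<in> descents \<beta>. ps \<beta> i < x}"
proof (intro equalityI subsetI)
  fix x assume "x \<in> (+) (ps \<beta> i) ` descents (drop i \<beta>)"
  then obtain t where t: "x = ps \<beta> i + ps (drop i \<beta>) t" "1 \<le> t" "t < length (drop i \<beta>)"
    unfolding descents_def by blast
  then have x: "x = ps \<beta> (i + t)" by (simp add: ps_drop)
  have "i + t < length \<beta>" using t by simp
  then have "x \<in> descents \<beta>" using x t(2) unfolding descents_def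
    by (intro CollectI exI[of _ "i + t"]) auto
  moreover have "ps \<beta> i < x" using x ps_strict[OF c, of i "i + t"] t by simp
  ultimately show "x \<in> {x \<in> descents \<beta>. ps \<beta> i < x}" by simp
next
  fix x assume x: "x \<in> {x \<in> descents \<beta>. ps \<beta> i < x}"
  then obtain t where t: "x = ps \<beta> t" "1 \<le> t" "t < length \<beta>"
    unfolding descents_def by blast
  have "i < t"
  proof (rule ccontr)
    assume "\<not> i < t"
    then have "ps \<beta> t \<le> ps \<beta> i" using ps_mono[OF c, of t i] i by simp
    then show False using x t by simp
  qed
  then have xe: "x = ps \<beta> i + ps (drop i \<beta>) (t - i)" using t ps_drop[where \<beta>=\<beta> and i=i and t="t - i"] by simp
  have "ps (drop i \<beta>) (t - i) \<in> descents (drop i \<beta>)"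
    unfolding descents_def using \<open>i < t\<close> t by (intro CollectI exI[of _ "t - i"]) auto
  then show "x \<in> (+) (ps \<beta> i) ` descents (drop i \<beta>)" using xe by blast
qed

lemma descents_mem:
  assumes "x \<in> descents \<beta>"
  obtains i where "1 \<le> i" "i < length \<beta>" "x = ps \<beta> i"
  using assms unfolding descents_def by blast

lemma descents_memI:
  assumes "1 \<le> i" "i < length \<beta>"
  shows "ps \<beta> i \<in> descents \<beta>"
  using assms unfolding descents_def by blast

lemma composition_take: "composition \<beta> \<Longrightarrow> 1 \<le> i \<Longrightarrow> composition (take i \<beta>)"
  unfolding composition_def by (auto dest: in_set_takeD)

lemma composition_drop: "composition \<beta> \<Longrightarrow> i < length \<beta> \<Longrightarrow> composition (drop i \<beta>)"
  unfolding composition_def by (auto dest: in_set_dropD)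

lemma sorted_insert_max:
  assumes "finite K" "\<forall>y\<in>K. y < (x::nat)"
  shows "sorted_list_of_set (insert x K) = sorted_list_of_set K @ [x]"
proof -
  have "x \<notin> K" using assms(2) by blast
  have "sorted_wrt (<) (sorted_list_of_set K @ [x]) \<and> set (sorted_list_of_set K @ [x]) = insert x K
      \<and> length (sorted_list_of_set K @ [x]) = card (insert x K)"
    using assms \<open>x \<notin> K\<close> by (auto simp: sorted_wrt_append)
  note * = this
  show ?thesis
    by (rule sorted_list_of_set_unique[THEN iffD1]) (use * assms(1) in auto)
qed

lemma sorted_insert_min:
  assumes "finite K" "\<forall>y\<in>K. (x::nat) < y"
  shows "sorted_list_of_set (insert x K) = x # sorted_list_of_set K"
proof -
  have "x \<notin> K" using assms(2) by blast
  have "sorted_wrt (<) (x # sorted_list_of_set K) \<and> set (x # sorted_list_of_set K) = insert x K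
      \<and> length (x # sorted_list_of_set K) = card (insert x K)"
    using assms \<open>x \<notin> K\<close> by auto
  note * = this
  show ?thesis
    by (rule sorted_list_of_set_unique[THEN iffD1]) (use * assms(1) in auto)
qed

lemma pattern_snoc:
  assumes "\<forall>y\<in>Poly_Mapping.keys m'. y < x" "0 < j"
  shows "pattern (m' + Poly_Mapping.single x j) = pattern m' @ [j]"
proof -
  have xn: "x \<notin> Poly_Mapping.keys m'" using assms(1) by blast
  have k: "Poly_Mapping.keys (m' + Poly_Mapping.single x j) = insert x (Poly_Mapping.keys m')"
    using assms(2) by (simp add: keys_add_nat)
  have s: "sorted_list_of_set (insert x (Poly_Mapping.keys m')) = sorted_list_of_set (Poly_Mapping.keys m') @ [x]"
    using assms(1) by (intro sorted_insert_max) auto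
  have "map (Poly_Mapping.lookup (m' + Poly_Mapping.single x j)) (sorted_list_of_set (Poly_Mapping.keys m'))
      = map (Poly_Mapping.lookup m') (sorted_list_of_set (Poly_Mapping.keys m'))"
  proof (rule map_cong[OF refl])
    fix y assume "y \<in> set (sorted_list_of_set (Poly_Mapping.keys m'))"
    then have "y \<noteq> x" using xn by auto
    then show "Poly_Mapping.lookup (m' + Poly_Mapping.single x j) y = Poly_Mapping.lookup m' y"
      by (simp add: lookup_add lookup_single)
  qed
  moreover have "Poly_Mapping.lookup (m' + Poly_Mapping.single x j) x = j"
    using xn by (simp add: lookup_add in_keys_iff)
  ultimately show ?thesis unfolding pattern_def k s by simp
qed

lemma pattern_cons:
  assumes "\<forall>y\<in>Poly_Mapping.keys m'. x < y" "0 < k"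
  shows "pattern (Poly_Mapping.single x k + m') = k # pattern m'"
proof -
  have xn: "x \<notin> Poly_Mapping.keys m'" using assms(1) by blast
  have kk: "Poly_Mapping.keys (Poly_Mapping.single x k + m') = insert x (Poly_Mapping.keys m')"
    using assms(2) by (simp add: keys_add_nat)
  have s: "sorted_list_of_set (insert x (Poly_Mapping.keys m')) = x # sorted_list_of_set (Poly_Mapping.keys m')"
    using assms(1) by (intro sorted_insert_min) auto
  have "map (Poly_Mapping.lookup (Poly_Mapping.single x k + m')) (sorted_list_of_set (Poly_Mapping.keys m'))
      = map (Poly_Mapping.lookup m') (sorted_list_of_set (Poly_Mapping.keys m'))"
  proof (rule map_cong[OF refl])
    fix y assume "y \<in> set (sorted_list_of_set (Poly_Mapping.keys m'))"
    then have "y \<noteq> x" using xn by auto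
    then show "Poly_Mapping.lookup (Poly_Mapping.single x k + m') y = Poly_Mapping.lookup m' y"
      by (simp add: lookup_add lookup_single)
  qed
  moreover have "Poly_Mapping.lookup (Poly_Mapping.single x k + m') x = k"
    using xn by (simp add: lookup_add in_keys_iff)
  ultimately show ?thesis unfolding pattern_def kk s by simp
qed

lemma single_nz: "0 < N \<Longrightarrow> Poly_Mapping.single x N \<noteq> (0::monom)"
  by (metis less_irrefl mdeg_single mdeg_zero)

lemma composition_pattern': "m \<noteq> 0 \<Longrightarrow> composition (pattern m)"
  using composition_pattern by blast

lemma Lp_snoc_mid:
  assumes c: "composition \<beta>" and kx: "\<forall>y\<in>Poly_Mapping.keys m'. y < x"
    and j: "0 < j" "j < sum_list \<beta>"
  shows "Lp \<beta> (m' + Poly_Mapping.single x j) \<longleftrightarrow>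
         (\<exists>i\<in>{1..<length \<beta>}. sum_list \<beta> - ps \<beta> i = j \<and> Lp (take i \<beta>) m')"
proof
  assume L: "Lp \<beta> (m' + Poly_Mapping.single x j)"
  have md: "mdeg m' + j = sum_list \<beta>"
    using L unfolding Lp_def by (simp add: mdeg_add mdeg_single)
  then have m0: "m' \<noteq> 0" using j by auto
  have pat: "pattern (m' + Poly_Mapping.single x j) = pattern m' @ [j]"
    using pattern_snoc[OF kx j(1)] .
  have pne: "pattern m' \<noteq> []" using m0 pattern_Nil_iff by blast
  have D: "insert (mdeg m') (descents (pattern m')) \<subseteq> descents \<beta>"
    using L unfolding Lp_def pat descents_snoc[OF pne] sum_list_pattern by simp
  then obtain i where i: "1 \<le> i" "i < length \<beta>" "mdeg m' = ps \<beta> i"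
    by (meson descents_mem insert_subset)
  have "Lp (take i \<beta>) m'"
    unfolding Lp_def
  proof (intro conjI)
    show "m' \<noteq> 0" by fact
    show "mdeg m' = sum_list (take i \<beta>)" using i by simp
    show "descents (pattern m') \<subseteq> descents (take i \<beta>)"
    proof
      fix y assume y: "y \<in> descents (pattern m')"
      have "y < sum_list (pattern m')" using descents_bounds(2)[OF composition_pattern'[OF m0] y] .
      then have "y < ps \<beta> i" using i sum_list_pattern by simp
      moreover have "y \<in> descents \<beta>" using D y by blast
      ultimately show "y \<in> descents (take i \<beta>)" using descents_take[OF c, of i] i by simp
    qed
  qed
  moreover have "sum_list \<beta> - ps \<beta> i = j" using md i by simp
  ultimately show "\<exists>i\<in>{1..<length \<beta>}. sum_list \<beta> - ps \<beta> i = j \<and> Lp (take i \<beta>) m'"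
    using i by auto
next
  assume "\<exists>i\<in>{1..<length \<beta>}. sum_list \<beta> - ps \<beta> i = j \<and> Lp (take i \<beta>) m'"
  then obtain i where i: "1 \<le> i" "i < length \<beta>" "sum_list \<beta> - ps \<beta> i = j" and
    L: "Lp (take i \<beta>) m'" by auto
  have m0: "m' \<noteq> 0" and md: "mdeg m' = ps \<beta> i" and D: "descents (pattern m') \<subseteq> descents (take i \<beta>)"
    using L unfolding Lp_def by auto
  have "ps \<beta> i \<le> ps \<beta> (length \<beta>)" using ps_mono[OF c, of i "length \<beta>"] i by simp
  then have le: "ps \<beta> i \<le> sum_list \<beta>" by simp
  have pat: "pattern (m' + Poly_Mapping.single x j) = pattern m' @ [j]"
    using pattern_snoc[OF kx j(1)] .
  have pne: "pattern m' \<noteq> []" using m0 pattern_Nil_iff by blast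
  have "descents (take i \<beta>) \<subseteq> descents \<beta>" using descents_take[OF c, of i] i by auto
  moreover have "ps \<beta> i \<in> descents \<beta>" using i by (intro descents_memI) auto
  ultimately have "descents (pattern m' @ [j]) \<subseteq> descents \<beta>"
    using D md unfolding descents_snoc[OF pne] sum_list_pattern by auto
  moreover have "m' + Poly_Mapping.single x j \<noteq> 0"
    using m0 by (metis add_eq_0_iff_both_eq_0 mdeg_add mdeg_eq_0_iff)
  moreover have "mdeg (m' + Poly_Mapping.single x j) = sum_list \<beta>"
    using md i le by (simp add: mdeg_add mdeg_single)
  ultimately show "Lp \<beta> (m' + Poly_Mapping.single x j)" unfolding Lp_def pat by simp
qed

lemma Lp_snoc_top:
  assumes c: "composition \<beta>" and kx: "\<forall>y\<in>Poly_Mapping.keys m'. y < x"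
  shows "Lp \<beta> (m' + Poly_Mapping.single x (sum_list \<beta>)) \<longleftrightarrow> m' = 0"
proof
  assume "Lp \<beta> (m' + Poly_Mapping.single x (sum_list \<beta>))"
  then have "mdeg m' = 0" unfolding Lp_def by (simp add: mdeg_add mdeg_single)
  then show "m' = 0" by (simp add: mdeg_eq_0_iff)
next
  assume m0: "m' = 0"
  have pos: "0 < sum_list \<beta>" using c unfolding composition_def by (intro sum_list_pos) auto
  have "pattern (m' + Poly_Mapping.single x (sum_list \<beta>)) = [sum_list \<beta>]"
    using pattern_snoc[OF kx pos] m0 by (simp add: pattern_def)
  then show "Lp \<beta> (m' + Poly_Mapping.single x (sum_list \<beta>))"
    unfolding Lp_def using m0 pos single_nz by (simp add: descents_single mdeg_single)
qed

lemma sum_list_take_drop: "sum_list \<beta> = ps \<beta> i + sum_list (drop i \<beta>)"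
  by (metis append_take_drop_id sum_list_append)

lemma Lp_cons_mid:
  assumes c: "composition \<beta>" and kx: "\<forall>y\<in>Poly_Mapping.keys m'. x < y"
    and k: "0 < k" "k < sum_list \<beta>"
  shows "Lp \<beta> (Poly_Mapping.single x k + m') \<longleftrightarrow>
         (\<exists>i\<in>{1..<length \<beta>}. ps \<beta> i = k \<and> Lp (drop i \<beta>) m')"
proof
  assume L: "Lp \<beta> (Poly_Mapping.single x k + m')"
  have md: "k + mdeg m' = sum_list \<beta>"
    using L unfolding Lp_def by (simp add: mdeg_add mdeg_single)
  then have m0: "m' \<noteq> 0" using k by auto
  have pat: "pattern (Poly_Mapping.single x k + m') = k # pattern m'"
    using pattern_cons[OF kx k(1)] .
  have pne: "pattern m' \<noteq> []" using m0 pattern_Nil_iff by blast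
  have D: "insert k ((+) k ` descents (pattern m')) \<subseteq> descents \<beta>"
    using L unfolding Lp_def pat descents_Cons[OF pne] by simp
  then obtain i where i: "1 \<le> i" "i < length \<beta>" "k = ps \<beta> i"
    by (meson descents_mem insert_subset)
  have "Lp (drop i \<beta>) m'"
    unfolding Lp_def
  proof (intro conjI)
    show "m' \<noteq> 0" by fact
    show "mdeg m' = sum_list (drop i \<beta>)" using i md sum_list_take_drop[of \<beta> i] by simp
    show "descents (pattern m') \<subseteq> descents (drop i \<beta>)"
    proof
      fix y assume y: "y \<in> descents (pattern m')"
      have "0 < y" using descents_bounds(1)[OF composition_pattern'[OF m0] y] .
      moreover have "k + y \<in> descents \<beta>" using D y by blast
      ultimately have "k + y \<in> {z \<in> descents \<beta>. ps \<beta> i < z}" using i by simp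
      then have "k + y \<in> (+) (ps \<beta> i) ` descents (drop i \<beta>)"
        using descents_drop[OF c, of i] i by simp
      then show "y \<in> descents (drop i \<beta>)" using i by auto
    qed
  qed
  then show "\<exists>i\<in>{1..<length \<beta>}. ps \<beta> i = k \<and> Lp (drop i \<beta>) m'"
    using i by auto
next
  assume "\<exists>i\<in>{1..<length \<beta>}. ps \<beta> i = k \<and> Lp (drop i \<beta>) m'"
  then obtain i where i: "1 \<le> i" "i < length \<beta>" "ps \<beta> i = k" and
    L: "Lp (drop i \<beta>) m'" by auto
  have m0: "m' \<noteq> 0" and md: "mdeg m' = sum_list (drop i \<beta>)" and D: "descents (pattern m') \<subseteq> descents (drop i \<beta>)"
    using L unfolding Lp_def by auto
  have pat: "pattern (Poly_Mapping.single x k + m') = k # pattern m'"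
    using pattern_cons[OF kx k(1)] .
  have pne: "pattern m' \<noteq> []" using m0 pattern_Nil_iff by blast
  have "(+) (ps \<beta> i) ` descents (drop i \<beta>) \<subseteq> descents \<beta>" using descents_drop[OF c, of i] i by auto
  moreover have "ps \<beta> i \<in> descents \<beta>" using i by (intro descents_memI) auto
  ultimately have "descents (k # pattern m') \<subseteq> descents \<beta>"
    using D i unfolding descents_Cons[OF pne] by auto
  moreover have "Poly_Mapping.single x k + m' \<noteq> 0"
    using m0 by (metis add_eq_0_iff_both_eq_0 mdeg_add mdeg_eq_0_iff)
  moreover have "mdeg (Poly_Mapping.single x k + m') = sum_list \<beta>"
    using md i sum_list_take_drop[of \<beta> i] by (simp add: mdeg_add mdeg_single)
  ultimately show "Lp \<beta> (Poly_Mapping.single x k + m')" unfolding Lp_def pat by simp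
qed

lemma Lp_cons_top:
  assumes c: "composition \<beta>" and kx: "\<forall>y\<in>Poly_Mapping.keys m'. x < y"
  shows "Lp \<beta> (Poly_Mapping.single x (sum_list \<beta>) + m') \<longleftrightarrow> m' = 0"
proof
  assume "Lp \<beta> (Poly_Mapping.single x (sum_list \<beta>) + m')"
  then have "mdeg m' = 0" unfolding Lp_def by (simp add: mdeg_add mdeg_single)
  then show "m' = 0" by (simp add: mdeg_eq_0_iff)
next
  assume m0: "m' = 0"
  have pos: "0 < sum_list \<beta>" using c unfolding composition_def by (intro sum_list_pos) auto
  have "pattern (Poly_Mapping.single x (sum_list \<beta>) + m') = [sum_list \<beta>]"
    using pattern_cons[OF kx pos] m0 by (simp add: pattern_def)
  then show "Lp \<beta> (Poly_Mapping.single x (sum_list \<beta>) + m')"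
    unfolding Lp_def using m0 pos single_nz by (simp add: descents_single mdeg_single)
qed

definition Cnt :: "nat list \<Rightarrow> nat \<Rightarrow> nat" where
  "Cnt \<beta> q = card {m. Poly_Mapping.keys m \<subseteq> {1..q} \<and> Lp \<beta> m}"

lemma card_split_last:
  assumes PN: "\<And>m. P m \<Longrightarrow> mdeg m \<le> N"
  shows "card {m. Poly_Mapping.keys m \<subseteq> {1..Suc q} \<and> P m}
       = (\<Sum>j\<in>{0..N}. card {m'. Poly_Mapping.keys m' \<subseteq> {1..q} \<and> P (m' + Poly_Mapping.single (Suc q) j)})"
proof -
  define T where "T j = {m'. Poly_Mapping.keys m' \<subseteq> {1..q} \<and> P (m' + Poly_Mapping.single (Suc q) j)}" for j
  define h where "h j = (\<lambda>m'::monom. m' + Poly_Mapping.single (Suc q) j)" for j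
  have fT: "finite (T j)" for j
  proof (rule finite_subset[OF _ finite_Mon[of "{1..q}" N]])
    show "T j \<subseteq> Mon {1..q} N"
    proof
      fix m' assume "m' \<in> T j"
      then have "Poly_Mapping.keys m' \<subseteq> {1..q}" "mdeg (m' + Poly_Mapping.single (Suc q) j) \<le> N"
        using PN unfolding T_def by auto
      then show "m' \<in> Mon {1..q} N" unfolding Mon_def by (simp add: mdeg_add)
    qed
  qed simp
  have l0: "Poly_Mapping.lookup m' (Suc q) = 0" if "m' \<in> T j" for m' j
    using that unfolding T_def by (auto simp: in_keys_iff)
  have lh: "Poly_Mapping.lookup (h j m') (Suc q) = j" if "m' \<in> T j" for m' j
    using l0[OF that] by (simp add: h_def lookup_add)
  have eq: "{m. Poly_Mapping.keys m \<subseteq> {1..Suc q} \<and> P m} = (\<Union>j\<in>{0..N}. h j ` T j)"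
  proof (intro equalityI subsetI)
    fix m assume m: "m \<in> {m. Poly_Mapping.keys m \<subseteq> {1..Suc q} \<and> P m}"
    define j where "j = Poly_Mapping.lookup m (Suc q)"
    define m' where "m' = m - Poly_Mapping.single (Suc q) j"
    have mm: "m = m' + Poly_Mapping.single (Suc q) j"
      by (rule poly_mapping_eqI) (auto simp: m'_def j_def lookup_add lookup_minus lookup_single when_def)
    have jN: "j \<le> N" using m PN lookup_le_mdeg[of m "Suc q"] unfolding j_def by fastforce
    have "Poly_Mapping.keys m' \<subseteq> {1..q}"
    proof
      fix y assume y: "y \<in> Poly_Mapping.keys m'"
      then have "y \<noteq> Suc q" by (auto simp: m'_def j_def in_keys_iff lookup_minus)
      moreover have "y \<in> Poly_Mapping.keys m"
        using y by (auto simp: m'_def in_keys_iff lookup_minus)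
      ultimately show "y \<in> {1..q}" using m by auto
    qed
    then have "m' \<in> T j" using m mm unfolding T_def by auto
    then show "m \<in> (\<Union>j\<in>{0..N}. h j ` T j)" using jN mm unfolding h_def by auto
  next
    fix m assume "m \<in> (\<Union>j\<in>{0..N}. h j ` T j)"
    then obtain j m' where j: "m' \<in> T j" "m = m' + Poly_Mapping.single (Suc q) j"
      unfolding h_def by auto
    then have "Poly_Mapping.keys m \<subseteq> {1..Suc q}" "P m" unfolding T_def using keys_add_nat
      by (auto simp: keys_add_nat)
    then show "m \<in> {m. Poly_Mapping.keys m \<subseteq> {1..Suc q} \<and> P m}" by simp
  qed
  have "card (\<Union>j\<in>{0..N}. h j ` T j) = (\<Sum>j\<in>{0..N}. card (h j ` T j))"
  proof (rule card_UN_disjoint)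
    show "\<forall>j\<in>{0..N}. finite (h j ` T j)" using fT by simp
    show "\<forall>i\<in>{0..N}. \<forall>j\<in>{0..N}. i \<noteq> j \<longrightarrow> h i ` T i \<inter> h j ` T j = {}"
    proof (intro ballI impI)
      fix i j :: nat assume "i \<noteq> j"
      show "h i ` T i \<inter> h j ` T j = {}"
      proof (rule ccontr)
        assume "h i ` T i \<inter> h j ` T j \<noteq> {}"
        then obtain a b where "a \<in> T i" "b \<in> T j" "h i a = h j b" by blast
        then have "Poly_Mapping.lookup (h i a) (Suc q) = Poly_Mapping.lookup (h j b) (Suc q)" by simp
        then show False using lh \<open>a \<in> T i\<close> \<open>b \<in> T j\<close> \<open>i \<noteq> j\<close> by simp
      qed
    qed
  qed simp
  also have "\<dots> = (\<Sum>j\<in>{0..N}. card (T j))"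
  proof (rule sum.cong[OF refl])
    fix j show "card (h j ` T j) = card (T j)"
      by (rule card_image) (simp add: h_def inj_on_def)
  qed
  finally show ?thesis using eq unfolding T_def by simp
qed

lemma Cnt_0: "Cnt \<beta> 0 = 0"
proof -
  have "{m. Poly_Mapping.keys m \<subseteq> {1..0} \<and> Lp \<beta> m} = {}"
  proof -
    { fix m :: monom assume "Poly_Mapping.keys m \<subseteq> {1..(0::nat)}"
      then have "Poly_Mapping.keys m = {}" by auto
      then have "m = 0" by simp
      then have "\<not> Lp \<beta> m" by (simp add: Lp_def) }
    then show ?thesis by blast
  qed
  then show ?thesis by (simp add: Cnt_def)
qed

lemma hockey:
  "1 \<le> l \<Longrightarrow> 1 + (\<Sum>i\<in>{1..<l}. (q + i - 1) choose i) = (q + l - 1) choose (l - 1)"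
proof (induction l rule: dec_induct)
  case base
  then show ?case by simp
next
  case (step l)
  have "{1..<Suc l} = insert l {1..<l}" using step.hyps by auto
  then have "1 + (\<Sum>i\<in>{1..<Suc l}. ((q + i - 1) choose i))
      = ((q + l - 1) choose l) + (1 + (\<Sum>i\<in>{1..<l}. ((q + i - 1) choose i)))" by simp
  also have "\<dots> = ((q + l - 1) choose l) + ((q + l - 1) choose (l - 1))" using step.IH by simp
  also have "\<dots> = ((q + l) choose l)"
  proof -
    obtain l' where l': "l = Suc l'" using step.hyps by (cases l) auto
    have "((q + l') choose (Suc l')) + ((q + l') choose l') = (Suc (q + l') choose Suc l')" by simp
    then show ?thesis using l' by simp
  qed
  finally show ?case by simp
qed

lemma Cnt_Suc:
  assumes c: "composition \<beta>"
  shows "Cnt \<beta> (Suc q) = Cnt \<beta> q + 1 + (\<Sum>i\<in>{1..<length \<beta>}. Cnt (take i \<beta>) q)"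
proof -
  define N where "N = sum_list \<beta>"
  have Npos: "0 < N" unfolding N_def using c unfolding composition_def by (intro sum_list_pos) auto
  define f where "f j = card {m'. Poly_Mapping.keys m' \<subseteq> {1..q} \<and> Lp \<beta> (m' + Poly_Mapping.single (Suc q) j)}" for j
  have "Cnt \<beta> (Suc q) = (\<Sum>j\<in>{0..N}. f j)"
    unfolding Cnt_def f_def N_def by (rule card_split_last) (simp add: Lp_def)
  also have "{0..N} = insert 0 (insert N {1..<N})" using Npos by auto
  also have "(\<Sum>j\<in>insert 0 (insert N {1..<N}). f j) = f 0 + f N + (\<Sum>j\<in>{1..<N}. f j)"
    using Npos by (simp add: add.assoc)
  also have "f 0 = Cnt \<beta> q" unfolding f_def Cnt_def by simp
  also have "f N = 1"
  proof -
    have "{m'. Poly_Mapping.keys m' \<subseteq> {1..q} \<and> Lp \<beta> (m' + Poly_Mapping.single (Suc q) N)} = {0}"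
    proof (intro equalityI subsetI)
      fix m' assume "m' \<in> {m'. Poly_Mapping.keys m' \<subseteq> {1..q} \<and> Lp \<beta> (m' + Poly_Mapping.single (Suc q) N)}"
      then have "Poly_Mapping.keys m' \<subseteq> {1..q}" "Lp \<beta> (m' + Poly_Mapping.single (Suc q) N)" by auto
      moreover have "\<forall>y\<in>Poly_Mapping.keys m'. y < Suc q" using calculation(1) by auto
      ultimately show "m' \<in> {0}" using Lp_snoc_top[OF c] unfolding N_def by auto
    next
      fix m' :: monom assume "m' \<in> {0}"
      then show "m' \<in> {m'. Poly_Mapping.keys m' \<subseteq> {1..q} \<and> Lp \<beta> (m' + Poly_Mapping.single (Suc q) N)}"
        using Lp_snoc_top[OF c, of 0 "Suc q"] unfolding N_def by simp
    qed
    then show ?thesis unfolding f_def by simp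
  qed
  also have "(\<Sum>j\<in>{1..<N}. f j) = (\<Sum>j\<in>{1..<N}. \<Sum>i\<in>{1..<length \<beta>}. if N - ps \<beta> i = j then Cnt (take i \<beta>) q else 0)"
  proof (rule sum.cong[OF refl])
    fix j assume j: "j \<in> {1..<N}"
    have set_eq: "{m'. Poly_Mapping.keys m' \<subseteq> {1..q} \<and> Lp \<beta> (m' + Poly_Mapping.single (Suc q) j)}
        = {m'. Poly_Mapping.keys m' \<subseteq> {1..q} \<and> (\<exists>i\<in>{1..<length \<beta>}. N - ps \<beta> i = j \<and> Lp (take i \<beta>) m')}"
    proof -
      have "Lp \<beta> (m' + Poly_Mapping.single (Suc q) j) \<longleftrightarrow> (\<exists>i\<in>{1..<length \<beta>}. N - ps \<beta> i = j \<and> Lp (take i \<beta>) m')"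
        if "Poly_Mapping.keys m' \<subseteq> {1..q}" for m'
      proof -
        have "\<forall>y\<in>Poly_Mapping.keys m'. y < Suc q" using that by auto
        moreover have "0 < j" "j < sum_list \<beta>" using j unfolding N_def by auto
        ultimately show ?thesis using Lp_snoc_mid[OF c, of m' "Suc q" j] unfolding N_def by blast
      qed
      then show ?thesis by blast
    qed
    show "f j = (\<Sum>i\<in>{1..<length \<beta>}. if N - ps \<beta> i = j then Cnt (take i \<beta>) q else 0)"
    proof (cases "\<exists>i\<in>{1..<length \<beta>}. N - ps \<beta> i = j")
      case True
      then obtain i0 where i0: "i0 \<in> {1..<length \<beta>}" "N - ps \<beta> i0 = j" by blast
      have le: "ps \<beta> i \<le> N" if "i \<in> {1..<length \<beta>}" for i
        using ps_mono[OF c, of i "length \<beta>"] that unfolding N_def by simp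
      have uniq: "i = i0" if "i \<in> {1..<length \<beta>}" "N - ps \<beta> i = j" for i
      proof -
        have "ps \<beta> i = ps \<beta> i0" using that i0 le[OF that(1)] le[OF i0(1)] by simp
        then show ?thesis using ps_inj[OF c] that(1) i0(1) by simp
      qed
      have se: "{m'. Poly_Mapping.keys m' \<subseteq> {1..q} \<and> (\<exists>i\<in>{1..<length \<beta>}. N - ps \<beta> i = j \<and> Lp (take i \<beta>) m')}
          = {m'. Poly_Mapping.keys m' \<subseteq> {1..q} \<and> Lp (take i0 \<beta>) m'}"
      proof (intro equalityI subsetI)
        fix m' assume "m' \<in> {m'. Poly_Mapping.keys m' \<subseteq> {1..q} \<and> (\<exists>i\<in>{1..<length \<beta>}. N - ps \<beta> i = j \<and> Lp (take i \<beta>) m')}"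
        then obtain i where "Poly_Mapping.keys m' \<subseteq> {1..q}" "i \<in> {1..<length \<beta>}" "N - ps \<beta> i = j" "Lp (take i \<beta>) m'"
          by blast
        moreover then have "i = i0" using uniq by blast
        ultimately show "m' \<in> {m'. Poly_Mapping.keys m' \<subseteq> {1..q} \<and> Lp (take i0 \<beta>) m'}" by simp
      next
        fix m' assume "m' \<in> {m'. Poly_Mapping.keys m' \<subseteq> {1..q} \<and> Lp (take i0 \<beta>) m'}"
        then show "m' \<in> {m'. Poly_Mapping.keys m' \<subseteq> {1..q} \<and> (\<exists>i\<in>{1..<length \<beta>}. N - ps \<beta> i = j \<and> Lp (take i \<beta>) m')}"
          using i0 by blast
      qed
      have fj: "f j = Cnt (take i0 \<beta>) q" unfolding f_def set_eq se Cnt_def by (rule refl)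
      have "(\<Sum>i\<in>{1..<length \<beta>}. if N - ps \<beta> i = j then Cnt (take i \<beta>) q else 0)
          = (\<Sum>i\<in>{1..<length \<beta>}. if i = i0 then Cnt (take i \<beta>) q else 0)"
      proof (rule sum.cong[OF refl])
        fix i assume i: "i \<in> {1..<length \<beta>}"
        show "(if N - ps \<beta> i = j then Cnt (take i \<beta>) q else 0) = (if i = i0 then Cnt (take i \<beta>) q else 0)"
        proof (cases "i = i0")
          case True then show ?thesis using i0 by simp
        next
          case False
          then have "N - ps \<beta> i \<noteq> j" using uniq[OF i] by blast
          then show ?thesis using False by simp
        qed
      qed
      also have "\<dots> = Cnt (take i0 \<beta>) q" using i0(1) by (subst sum.delta) auto
      finally show ?thesis using fj by simp
    next
      case False
      then have "{m'. Poly_Mapping.keys m' \<subseteq> {1..q} \<and> (\<exists>i\<in>{1..<length \<beta>}. N - ps \<beta> i = j \<and> Lp (take i \<beta>) m')} = {}"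
        by blast
      then have "f j = 0" unfolding f_def set_eq by (simp only: card.empty)
      moreover have "(\<Sum>i\<in>{1..<length \<beta>}. if N - ps \<beta> i = j then Cnt (take i \<beta>) q else 0) = 0"
      proof (rule sum.neutral, rule ballI)
        fix i assume "i \<in> {1..<length \<beta>}"
        then have "N - ps \<beta> i \<noteq> j" using False by blast
        then show "(if N - ps \<beta> i = j then Cnt (take i \<beta>) q else 0) = 0" by simp
      qed
      ultimately show ?thesis by simp
    qed
  qed
  also have "\<dots> = (\<Sum>i\<in>{1..<length \<beta>}. \<Sum>j\<in>{1..<N}. if N - ps \<beta> i = j then Cnt (take i \<beta>) q else 0)"
    by (rule sum.swap)
  also have "\<dots> = (\<Sum>i\<in>{1..<length \<beta>}. Cnt (take i \<beta>) q)"
  proof (rule sum.cong[OF refl])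
    fix i assume i: "i \<in> {1..<length \<beta>}"
    have "0 < ps \<beta> i" using ps_strict[OF c, of 0 i] i by simp
    moreover have "ps \<beta> i < N" using ps_strict[OF c, of i "length \<beta>"] i unfolding N_def by simp
    ultimately have "N - ps \<beta> i \<in> {1..<N}" by auto
    then show "(\<Sum>j\<in>{1..<N}. if N - ps \<beta> i = j then Cnt (take i \<beta>) q else 0) = Cnt (take i \<beta>) q"
      by simp
  qed
  finally show ?thesis by simp
qed

lemma Cnt_formula:
  "composition \<beta> \<Longrightarrow> Cnt \<beta> q = ((q + length \<beta> - 1) choose (length \<beta>))"
proof (induction q arbitrary: \<beta>)
  case 0
  have "length \<beta> - 1 < length \<beta>" using 0 unfolding composition_def by (cases \<beta>) auto
  then show ?case by (simp add: Cnt_0)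
next
  case (Suc q)
  have l1: "1 \<le> length \<beta>" using Suc.prems unfolding composition_def by (cases \<beta>) auto
  have "Cnt \<beta> (Suc q) = Cnt \<beta> q + 1 + (\<Sum>i\<in>{1..<length \<beta>}. Cnt (take i \<beta>) q)"
    using Cnt_Suc[OF Suc.prems] .
  also have "(\<Sum>i\<in>{1..<length \<beta>}. Cnt (take i \<beta>) q) = (\<Sum>i\<in>{1..<length \<beta>}. ((q + i - 1) choose i))"
  proof (rule sum.cong[OF refl])
    fix i assume i: "i \<in> {1..<length \<beta>}"
    have "composition (take i \<beta>)" using composition_take[OF Suc.prems] i by simp
    then show "Cnt (take i \<beta>) q = ((q + i - 1) choose i)" using Suc.IH i by simp
  qed
  also have "Cnt \<beta> q = ((q + length \<beta> - 1) choose (length \<beta>))" using Suc.IH[OF Suc.prems] .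
  finally have "Cnt \<beta> (Suc q) = ((q + length \<beta> - 1) choose (length \<beta>)) + ((q + length \<beta> - 1) choose (length \<beta> - 1))"
    using hockey[OF l1, of q] by simp
  also have "\<dots> = ((Suc q + length \<beta> - 1) choose (length \<beta>))"
  proof -
    obtain l' where l': "length \<beta> = Suc l'" using l1 by (cases "length \<beta>") auto
    show ?thesis using l' by simp
  qed
  finally show ?case .
qed

lemma eisenstein_deg:
  fixes B C :: "int poly" and p :: int
  assumes p: "prime p" and dB: "degree B = d" and dC: "degree C = e"
    and lB: "\<not> p dvd coeff B d" and lC: "\<not> p dvd coeff C e"
    and mid: "\<And>k. k < d + e \<Longrightarrow> p dvd coeff (B * C) k"
    and c0: "\<not> p^2 dvd coeff (B * C) 0"
  shows "d = 0 \<or> e = 0"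
proof (rule ccontr)
  assume "\<not> (d = 0 \<or> e = 0)"
  then have dpos: "0 < d" and epos: "0 < e" by auto
  define i0 where "i0 = (LEAST i. \<not> p dvd coeff B i)"
  define j0 where "j0 = (LEAST j. \<not> p dvd coeff C j)"
  have i0: "\<not> p dvd coeff B i0" unfolding i0_def using lB by (rule LeastI)
  have j0: "\<not> p dvd coeff C j0" unfolding j0_def using lC by (rule LeastI)
  have i0d: "i0 \<le> d" unfolding i0_def using lB by (rule Least_le)
  have j0e: "j0 \<le> e" unfolding j0_def using lC by (rule Least_le)
  have bi: "p dvd coeff B i" if "i < i0" for i using not_less_Least[OF that[unfolded i0_def]] i0_def by blast
  have cj: "p dvd coeff C j" if "j < j0" for j using not_less_Least[OF that[unfolded j0_def]] j0_def by blast
  define N where "N = i0 + j0"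
  have "coeff (B * C) N = (\<Sum>i\<le>N. coeff B i * coeff C (N - i))" by (rule coeff_mult)
  also have "\<dots> = coeff B i0 * coeff C (N - i0) + (\<Sum>i\<in>{..N} - {i0}. coeff B i * coeff C (N - i))"
    by (rule sum.remove) (auto simp: N_def)
  finally have eqN: "coeff (B * C) N = coeff B i0 * coeff C j0 + (\<Sum>i\<in>{..N} - {i0}. coeff B i * coeff C (N - i))"
    by (simp add: N_def)
  have rest: "p dvd (\<Sum>i\<in>{..N} - {i0}. coeff B i * coeff C (N - i))"
  proof (rule dvd_sum)
    fix i assume i: "i \<in> {..N} - {i0}"
    show "p dvd coeff B i * coeff C (N - i)"
    proof (cases "i < i0")
      case True then show ?thesis using bi by simp
    next
      case False
      then have "N - i < j0" using i unfolding N_def by auto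
      then show ?thesis using cj by simp
    qed
  qed
  have "\<not> p dvd coeff B i0 * coeff C j0" using i0 j0 p by (simp add: prime_dvd_mult_iff)
  then have "\<not> p dvd coeff (B * C) N" using eqN rest by (metis dvd_add_left_iff)
  then have "\<not> N < d + e" using mid by blast
  then have "i0 = d" using i0d j0e unfolding N_def by simp
  moreover have "j0 = e" using i0d j0e \<open>\<not> N < d + e\<close> unfolding N_def by simp
  ultimately have "p dvd coeff B 0" "p dvd coeff C 0" using bi cj dpos epos by auto
  then have "p * p dvd coeff B 0 * coeff C 0" by (rule mult_dvd_mono)
  then have "p^2 dvd coeff (B * C) 0" by (simp add: coeff_mult_0 power2_eq_square)
  then show False using c0 by simp
qed

lemma fact_add_prod: "fact (a + b) = (fact a :: nat) * (\<Prod>i\<in>{a+1..a+b}. i)"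
proof (induction b)
  case 0 then show ?case by simp
next
  case (Suc b)
  have "{a+1..a + Suc b} = insert (a + Suc b) {a+1..a+b}" by auto
  then have "(\<Prod>i\<in>{a+1..a + Suc b}. i) = (a + Suc b) * (\<Prod>i\<in>{a+1..a+b}. i)" by simp
  then show ?case using Suc.IH by (simp add: algebra_simps)
qed

lemma binom_key:
  fixes p l :: nat
  assumes p: "prime p" and l: "1 \<le> l" "l < p"
  shows "((p + l - 1) choose l) * fact l = p * (\<Prod>i\<in>{p+1..p+l-1}. i)"
    and "\<not> p dvd fact l" and "\<not> p dvd (\<Prod>i\<in>{p+1..p+l-1}. i)"
proof -
  have p1: "1 \<le> p" using prime_ge_1_nat[OF p] .
  have "fact l * fact (p + l - 1 - l) * ((p + l - 1) choose l) = (fact (p + l - 1) :: nat)"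
    using l by (intro binomial_fact_lemma) simp
  moreover have "p + l - 1 - l = p - 1" using p1 by simp
  moreover have "fact (p + l - 1) = (fact (p - 1) :: nat) * (\<Prod>i\<in>{p..p+l-1}. i)"
    using fact_add_prod[of "p - 1" l] p1 by simp
  moreover have "(\<Prod>i\<in>{p..p+l-1}. i) = p * (\<Prod>i\<in>{p+1..p+l-1}. i)"
  proof -
    have "{p..p+l-1} = insert p {p+1..p+l-1}" using l by auto
    then show ?thesis by simp
  qed
  ultimately have "fact (p - 1) * (((p + l - 1) choose l) * fact l) = fact (p - 1) * (p * (\<Prod>i\<in>{p+1..p+l-1}. i))"
    by (simp add: algebra_simps)
  then show "((p + l - 1) choose l) * fact l = p * (\<Prod>i\<in>{p+1..p+l-1}. i)"
    by (metis fact_nonzero mult_left_cancel)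
  show "\<not> p dvd fact l" using prime_dvd_fact_iff[OF p] l by simp
  show "\<not> p dvd (\<Prod>i\<in>{p+1..p+l-1}. i)"
  proof
    assume a: "p dvd (\<Prod>i\<in>{p+1..p+l-1}. i)"
    have "\<exists>i\<in>{p+1..p+l-1}. p dvd i"
      using prime_dvd_prod_iff[of "{p+1..p+l-1}" p "\<lambda>i. i"] p a by simp
    then obtain i where i: "i \<in> {p+1..p+l-1}" "p dvd i" by blast
    then obtain t where t: "i = p * t" by blast
    have a0: "p < i" using i by auto
    then have a1: "p < p * t" unfolding t .
    have t1: "1 < t"
    proof (rule ccontr)
      assume "\<not> 1 < t" then have "t \<le> 1" by simp
      then have "p * t \<le> p * 1" by (rule mult_le_mono2)
      with a1 show False by simp
    qed
    have a3: "i < p * 2" using i l by auto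
    then have a2: "p * t < p * 2" unfolding t .
    have t2: "t < 2"
    proof (rule ccontr)
      assume "\<not> t < 2" then have "2 \<le> t" by simp
      then have "p * 2 \<le> p * t" by (rule mult_le_mono2)
      with a2 show False by simp
    qed
    show False using t1 t2 by simp
  qed
qed

lemma binom_dvd:
  fixes p l :: nat
  assumes p: "prime p" and l: "1 \<le> l" "l < p"
  shows "p dvd ((p + l - 1) choose l)"
proof -
  have "p dvd ((p + l - 1) choose l) * fact l" using binom_key(1)[OF assms] by simp
  then show ?thesis using binom_key(2)[OF assms] p by (simp add: prime_dvd_mult_iff)
qed

lemma binom_not_dvd2:
  fixes p l :: nat
  assumes p: "prime p" and l: "1 \<le> l" "l < p"
  shows "\<not> p^2 dvd ((p + l - 1) choose l)"
proof
  assume "p^2 dvd ((p + l - 1) choose l)"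
  then have "p * p dvd p * (\<Prod>i\<in>{p+1..p+l-1}. i)"
    using binom_key(1)[OF assms] by (metis dvd_mult2 power2_eq_square)
  then have "p dvd (\<Prod>i\<in>{p+1..p+l-1}. i)" using p by (simp add: prime_gt_0_nat)
  then show False using binom_key(3)[OF assms] by simp
qed

lemma split_single:
  "m = Poly_Mapping.single i (Poly_Mapping.lookup m i) + (m - Poly_Mapping.single i (Poly_Mapping.lookup m i))"
  by (rule poly_mapping_eqI) (simp add: lookup_add lookup_minus lookup_single when_def)

lemma Mon_top:
  assumes "0 \<in> V"
  shows "{m \<in> Mon V D. Poly_Mapping.lookup m 0 = D} = {Poly_Mapping.single 0 D}"
proof (intro equalityI subsetI)
  fix m :: monom assume m: "m \<in> {m \<in> Mon V D. Poly_Mapping.lookup m 0 = D}"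
  define m' where "m' = m - Poly_Mapping.single 0 (Poly_Mapping.lookup m 0)"
  have e: "m = Poly_Mapping.single 0 D + m'" using split_single[of m 0] m unfolding m'_def by simp
  have "mdeg m = D + mdeg m'" using e by (metis mdeg_add mdeg_single)
  then have "mdeg m' = 0" using m unfolding Mon_def by simp
  then have "m' = 0" by (simp add: mdeg_eq_0_iff)
  then show "m \<in> {Poly_Mapping.single 0 D}" using e by simp
next
  fix m :: monom assume "m \<in> {Poly_Mapping.single 0 D}"
  then show "m \<in> {m \<in> Mon V D. Poly_Mapping.lookup m 0 = D}"
    using assms by (auto simp: Mon_def mdeg_single)
qed

lemma Mon_above:
  assumes "D < k"
  shows "{m \<in> Mon V D. Poly_Mapping.lookup m 0 = k} = {}"
proof (rule equals0I)
  fix m assume m: "m \<in> {m \<in> Mon V D. Poly_Mapping.lookup m 0 = k}"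
  then have "Poly_Mapping.lookup m 0 \<le> D" using lookup_le_mdeg[of m 0] unfolding Mon_def by auto
  then show False using m assms by simp
qed

lemma spec_degree:
  assumes V: "finite V" "0 \<in> V" and nz: "f (Poly_Mapping.single 0 D) \<noteq> 0"
  shows "degree (spec V D f) = D" and "coeff (spec V D f) D = f (Poly_Mapping.single 0 D)"
proof -
  show cD: "coeff (spec V D f) D = f (Poly_Mapping.single 0 D)"
    unfolding coeff_spec[OF V(1)] Mon_top[OF V(2)] by simp
  have "\<forall>k>D. coeff (spec V D f) k = 0"
  proof (intro allI impI)
    fix k assume "D < k"
    show "coeff (spec V D f) k = 0"
      unfolding coeff_spec[OF V(1)] Mon_above[OF \<open>D < k\<close>] by simp
  qed
  then have "degree (spec V D f) \<le> D" by (simp add: degree_le)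
  moreover have "D \<le> degree (spec V D f)" using cD nz by (simp add: le_degree)
  ultimately show "degree (spec V D f) = D" by simp
qed

lemma sum_indicator_int:
  assumes "finite A"
  shows "(\<Sum>x\<in>A. if P x then 1 else 0) = (int (card {x\<in>A. P x}))"
proof -
  have "(\<Sum>x\<in>{x\<in>A. P x}. (1::int)) = (\<Sum>x\<in>A. if P x then 1 else 0)"
    by (rule sum.inter_filter[OF assms])
  then have "(\<Sum>x\<in>A. if P x then (1::int) else 0) = (\<Sum>x\<in>{x\<in>A. P x}. 1)" by simp
  then show ?thesis by simp
qed

lemma coeff_spec_L:
  assumes "composition \<alpha>"
  shows "coeff (spec {0..p} (sum_list \<alpha>) (L_qs \<alpha>)) k =
         int (card {m'. Poly_Mapping.keys m' \<subseteq> {1..p} \<and> Lp \<alpha> (Poly_Mapping.single 0 k + m')})"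
proof -
  define n where "n = sum_list \<alpha>"
  define V where "V = {0..p}"
  have fV: "finite V" by (simp add: V_def)
  have "coeff (spec V n (L_qs \<alpha>)) k = (\<Sum>m\<in>{m \<in> Mon V n. Poly_Mapping.lookup m 0 = k}. if Lp \<alpha> m then 1 else 0)"
    unfolding coeff_spec[OF fV] L_qs_eq by simp
  also have "\<dots> = int (card {m \<in> {m \<in> Mon V n. Poly_Mapping.lookup m 0 = k}. Lp \<alpha> m})"
    by (rule sum_indicator_int) (use finite_Mon[OF fV] in simp)
  also have "{m \<in> {m \<in> Mon V n. Poly_Mapping.lookup m 0 = k}. Lp \<alpha> m}
      = (\<lambda>m'. Poly_Mapping.single 0 k + m') ` {m'. Poly_Mapping.keys m' \<subseteq> {1..p} \<and> Lp \<alpha> (Poly_Mapping.single 0 k + m')}"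
  proof (intro equalityI subsetI)
    fix m assume m: "m \<in> {m \<in> {m \<in> Mon V n. Poly_Mapping.lookup m 0 = k}. Lp \<alpha> m}"
    define m' where "m' = m - Poly_Mapping.single 0 (Poly_Mapping.lookup m 0)"
    have e: "m = Poly_Mapping.single 0 k + m'" using split_single[of m 0] m unfolding m'_def by simp
    have "Poly_Mapping.keys m' \<subseteq> {1..p}"
    proof
      fix y assume y: "y \<in> Poly_Mapping.keys m'"
      have "y \<noteq> 0"
      proof
        assume "y = 0"
        then have "Poly_Mapping.lookup m' y = 0" by (simp add: m'_def lookup_minus)
        with y show False by (simp add: in_keys_iff)
      qed
      moreover have "y \<in> Poly_Mapping.keys m"
        using y by (auto simp: m'_def in_keys_iff lookup_minus)
      ultimately show "y \<in> {1..p}" using m unfolding Mon_def V_def by auto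
    qed
    then show "m \<in> (\<lambda>m'. Poly_Mapping.single 0 k + m') ` {m'. Poly_Mapping.keys m' \<subseteq> {1..p} \<and> Lp \<alpha> (Poly_Mapping.single 0 k + m')}"
      using e m by auto
  next
    fix m assume "m \<in> (\<lambda>m'. Poly_Mapping.single 0 k + m') ` {m'. Poly_Mapping.keys m' \<subseteq> {1..p} \<and> Lp \<alpha> (Poly_Mapping.single 0 k + m')}"
    then obtain m' where m': "m = Poly_Mapping.single 0 k + m'" "Poly_Mapping.keys m' \<subseteq> {1..p}"
      "Lp \<alpha> (Poly_Mapping.single 0 k + m')" by blast
    have "Poly_Mapping.lookup m' 0 = 0" using m'(2) by (auto simp: in_keys_iff)
    then have l0: "Poly_Mapping.lookup m 0 = k" using m'(1) by (simp add: lookup_add)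
    have "Poly_Mapping.keys m \<subseteq> V" using m'(1,2) unfolding V_def by (auto simp: keys_add_nat)
    moreover have "mdeg m = n" using m'(1,3) unfolding Lp_def n_def by simp
    ultimately show "m \<in> {m \<in> {m \<in> Mon V n. Poly_Mapping.lookup m 0 = k}. Lp \<alpha> m}"
      using l0 m' unfolding Mon_def by simp
  qed
  also have "card ((\<lambda>m'. Poly_Mapping.single 0 k + m') ` {m'. Poly_Mapping.keys m' \<subseteq> {1..p} \<and> Lp \<alpha> (Poly_Mapping.single 0 k + m')})
      = card {m'. Poly_Mapping.keys m' \<subseteq> {1..p} \<and> Lp \<alpha> (Poly_Mapping.single 0 k + m')}"
    by (rule card_image) (simp add: inj_on_def)
  finally show ?thesis unfolding n_def V_def .
qed

lemma card_mid_dvd: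
  assumes c: "composition \<alpha>" and p: "prime p" and pn: "sum_list \<alpha> < p"
    and k: "0 < k" "k < sum_list \<alpha>"
  shows "p dvd card {m'. Poly_Mapping.keys m' \<subseteq> {1..p} \<and> Lp \<alpha> (Poly_Mapping.single 0 k + m')}"
proof -
  have iff: "Lp \<alpha> (Poly_Mapping.single 0 k + m') \<longleftrightarrow> (\<exists>i\<in>{1..<length \<alpha>}. ps \<alpha> i = k \<and> Lp (drop i \<alpha>) m')"
    if "Poly_Mapping.keys m' \<subseteq> {1..p}" for m'
  proof -
    have "\<forall>y\<in>Poly_Mapping.keys m'. 0 < y" using that by auto
    then show ?thesis using Lp_cons_mid[OF c _ k] by blast
  qed
  show ?thesis
  proof (cases "\<exists>i\<in>{1..<length \<alpha>}. ps \<alpha> i = k")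
    case True
    then obtain i where i: "i \<in> {1..<length \<alpha>}" "ps \<alpha> i = k" by blast
    have uniq: "j = i" if "j \<in> {1..<length \<alpha>}" "ps \<alpha> j = k" for j
      using ps_inj[OF c, of j i] that i by simp
    have "{m'. Poly_Mapping.keys m' \<subseteq> {1..p} \<and> Lp \<alpha> (Poly_Mapping.single 0 k + m')}
        = {m'. Poly_Mapping.keys m' \<subseteq> {1..p} \<and> Lp (drop i \<alpha>) m'}"
    proof (intro equalityI subsetI)
      fix m' assume "m' \<in> {m'. Poly_Mapping.keys m' \<subseteq> {1..p} \<and> Lp \<alpha> (Poly_Mapping.single 0 k + m')}"
      then obtain j where "Poly_Mapping.keys m' \<subseteq> {1..p}" "j \<in> {1..<length \<alpha>}" "ps \<alpha> j = k" "Lp (drop j \<alpha>) m'"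
        using iff by blast
      moreover then have "j = i" using uniq by blast
      ultimately show "m' \<in> {m'. Poly_Mapping.keys m' \<subseteq> {1..p} \<and> Lp (drop i \<alpha>) m'}" by simp
    next
      fix m' assume "m' \<in> {m'. Poly_Mapping.keys m' \<subseteq> {1..p} \<and> Lp (drop i \<alpha>) m'}"
      then show "m' \<in> {m'. Poly_Mapping.keys m' \<subseteq> {1..p} \<and> Lp \<alpha> (Poly_Mapping.single 0 k + m')}"
        using iff i by blast
    qed
    then have "card {m'. Poly_Mapping.keys m' \<subseteq> {1..p} \<and> Lp \<alpha> (Poly_Mapping.single 0 k + m')} = Cnt (drop i \<alpha>) p"
      unfolding Cnt_def by simp
    also have "\<dots> = (p + length (drop i \<alpha>) - 1) choose (length (drop i \<alpha>))"
      using Cnt_formula composition_drop[OF c] i by simp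
    finally have e: "card {m'. Poly_Mapping.keys m' \<subseteq> {1..p} \<and> Lp \<alpha> (Poly_Mapping.single 0 k + m')}
        = (p + length (drop i \<alpha>) - 1) choose (length (drop i \<alpha>))" .
    have "length \<alpha> \<le> sum_list \<alpha>" using c length_le_sum_list unfolding composition_def by blast
    then have "1 \<le> length (drop i \<alpha>)" "length (drop i \<alpha>) < p" using i pn by auto
    then show ?thesis unfolding e by (rule binom_dvd[OF p])
  next
    case False
    then have E: "{m'. Poly_Mapping.keys m' \<subseteq> {1..p} \<and> Lp \<alpha> (Poly_Mapping.single 0 k + m')} = {}"
      using iff by blast
    show ?thesis unfolding E by simp
  qed
qed

lemma homog0_cst:
  assumes a: "\<forall>m. c m \<noteq> 0 \<longrightarrow> mdeg m = 0"
  shows "c = cst (c 0)"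
proof (rule ext)
  fix m show "c m = cst (c 0) m"
  proof (cases "m = 0")
    case True then show ?thesis unfolding cst_def by simp
  next
    case False
    have "c m = 0"
    proof (rule ccontr)
      assume "c m \<noteq> 0"
      then have "mdeg m = 0" using a by blast
      then show False using False mdeg_eq_0_iff by blast
    qed
    then show ?thesis using False unfolding cst_def by simp
  qed
qed

lemma core:
  assumes c: "composition \<alpha>" and bb: "bounded_degree b" and bc: "bounded_degree c"
    and prod: "Kmult b c = L_qs \<alpha>"
  shows "(\<exists>u. (u = 1 \<or> u = -1) \<and> b = cst u) \<or> (\<exists>u. (u = 1 \<or> u = -1) \<and> c = cst u)"
proof -
  define n where "n = sum_list \<alpha>"
  have npos: "0 < n" unfolding n_def using c unfolding composition_def by (intro sum_list_pos) auto
  have "Lp \<alpha> (Poly_Mapping.single 0 n + 0)"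
    using Lp_cons_top[OF c, of 0 0] unfolding n_def by simp
  then have Ltop: "L_qs \<alpha> (Poly_Mapping.single 0 n) = 1" by (simp add: L_qs_eq)
  have Lnz: "L_qs \<alpha> \<noteq> (\<lambda>_. 0)" proof
    assume "L_qs \<alpha> = (\<lambda>_. 0)"
    then have "L_qs \<alpha> (Poly_Mapping.single 0 n) = 0" by simp
    then show False using Ltop by simp
  qed
  have hom: "\<And>m. L_qs \<alpha> m \<noteq> 0 \<Longrightarrow> mdeg m = n" using L_hom unfolding n_def by blast
  obtain d e where de: "d + e = n" and hb: "\<forall>m. b m \<noteq> 0 \<longrightarrow> mdeg m = d"
    and hc: "\<forall>m. c m \<noteq> 0 \<longrightarrow> mdeg m = e"
    using homog_factors[OF bb bc prod hom Lnz] by blast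
  have "Kmult b c (Poly_Mapping.single 0 (d + e)) = b (Poly_Mapping.single 0 d) * c (Poly_Mapping.single 0 e)"
    by (rule coeff_pure[OF hb hc])
  then have one: "b (Poly_Mapping.single 0 d) * c (Poly_Mapping.single 0 e) = 1"
    using prod de Ltop by simp
  then have bu: "b (Poly_Mapping.single 0 d) = 1 \<or> b (Poly_Mapping.single 0 d) = -1"
    and cu: "c (Poly_Mapping.single 0 e) = 1 \<or> c (Poly_Mapping.single 0 e) = -1"
    by (auto simp: zmult_eq_1_iff)
  obtain p :: nat where p: "prime p" "n < p" using bigger_prime by blast
  define V where "V = {0..p}"
  have fV: "finite V" "0 \<in> V" by (auto simp: V_def)
  define B where "B = spec V d b"
  define C where "C = spec V e c"
  have BC: "spec V n (L_qs \<alpha>) = B * C"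
    unfolding B_def C_def using spec_mult[OF fV(1), of b d c e] hb hc de prod by simp
  have b0: "b (Poly_Mapping.single 0 d) \<noteq> 0" using bu by auto
  have c0: "c (Poly_Mapping.single 0 e) \<noteq> 0" using cu by auto
  have dB: "degree B = d" "coeff B d = b (Poly_Mapping.single 0 d)"
    unfolding B_def using spec_degree[where f=b and D=d, OF fV b0] by auto
  have dC: "degree C = e" "coeff C e = c (Poly_Mapping.single 0 e)"
    unfolding C_def using spec_degree[where f=c and D=e, OF fV c0] by auto
  have p1: "1 < p" using prime_gt_1_nat[OF p(1)] .
  have ip: "prime (int p)" using p(1) by simp
  have ndvd1: "\<not> int p dvd u" if "u = 1 \<or> u = -1" for u
    using that p1 by auto
  define l where "l = length \<alpha>"
  have l1: "1 \<le> l" using c unfolding composition_def l_def by (cases \<alpha>) auto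
  have "l \<le> n" unfolding l_def n_def using c length_le_sum_list unfolding composition_def by blast
  then have lp: "l < p" using p(2) by simp
  have coeffP: "coeff (B * C) k = int (card {m'. Poly_Mapping.keys m' \<subseteq> {1..p} \<and> Lp \<alpha> (Poly_Mapping.single 0 k + m')})" for k
    using coeff_spec_L[OF c, of p k] BC unfolding V_def n_def by simp
  have card0: "card {m'. Poly_Mapping.keys m' \<subseteq> {1..p} \<and> Lp \<alpha> (Poly_Mapping.single 0 0 + m')}
      = (p + l - 1) choose l"
    using Cnt_formula[OF c, of p] unfolding Cnt_def l_def by simp
  have "d = 0 \<or> e = 0"
  proof (rule eisenstein_deg[OF ip dB(1) dC(1)])
    show "\<not> int p dvd coeff B d" using dB(2) bu ndvd1 by simp
    show "\<not> int p dvd coeff C e" using dC(2) cu ndvd1 by simp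
    show "int p dvd coeff (B * C) k" if "k < d + e" for k
    proof (cases "k = 0")
      case True
      have "p dvd ((p + l - 1) choose l)" using binom_dvd[OF p(1) l1 lp] .
      then show ?thesis unfolding coeffP using card0 True by simp
    next
      case False
      have "p dvd card {m'. Poly_Mapping.keys m' \<subseteq> {1..p} \<and> Lp \<alpha> (Poly_Mapping.single 0 k + m')}"
        using card_mid_dvd[OF c p(1)] p(2) False that de unfolding n_def by simp
      then show ?thesis unfolding coeffP by simp
    qed
    show "\<not> (int p)^2 dvd coeff (B * C) 0"
    proof
      assume "(int p)^2 dvd coeff (B * C) 0"
      then have "int (p^2) dvd int ((p + l - 1) choose l)" unfolding coeffP card0 by simp
      then have "p^2 dvd ((p + l - 1) choose l)" by (simp only: int_dvd_int_iff)
      then show False using binom_not_dvd2[OF p(1) l1 lp] by simp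
    qed
  qed
  then show ?thesis
  proof
    assume "d = 0"
    then have "b = cst (b 0)" using hb by (intro homog0_cst) simp
    moreover have "b 0 = 1 \<or> b 0 = -1" using bu \<open>d = 0\<close> by simp
    ultimately show ?thesis by blast
  next
    assume "e = 0"
    then have "c = cst (c 0)" using hc by (intro homog0_cst) simp
    moreover have "c 0 = 1 \<or> c 0 = -1" using cu \<open>e = 0\<close> by simp
    ultimately show ?thesis by blast
  qed
qed

lemma Kmult_cst_right: "Kmult f (cst u) = (\<lambda>m. f m * u)"
proof
  fix w
  have "Kmult f (cst u) w = f w * cst u 0"
  proof (rule Kmult_single_term)
    show "w + 0 = w" by simp
    fix a b assume "a + b = w" "f a \<noteq> 0" "cst u b \<noteq> 0"
    then show "a = w \<and> b = 0" by (auto simp: cst_def split: if_splits)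
  qed
  then show "Kmult f (cst u) w = f w * u" by (simp add: cst_def)
qed

lemma Kmult_at0: "Kmult x y 0 = x 0 * y 0"
proof (rule Kmult_single_term)
  fix a b :: monom assume "a + b = 0"
  then have "mdeg a + mdeg b = 0" by (metis mdeg_add mdeg_zero)
  then show "a = 0 \<and> b = 0" by (simp add: mdeg_eq_0_iff)
qed simp

lemma L_at0: "L_qs \<alpha> 0 = 0"
  by (simp add: L_qs_eq Lp_def)

lemma cst_quasi: "quasi_symmetric (cst u)"
  unfolding quasi_symmetric_def bounded_degree_def
proof (intro conjI allI impI)
  show "\<exists>d. \<forall>m. cst u m \<noteq> 0 \<longrightarrow> mdeg m \<le> d"
    by (intro exI[of _ 0]) (simp add: cst_def)
  fix m m' :: monom assume "pattern m = pattern m'"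
  then have "m = 0 \<longleftrightarrow> m' = 0" using pattern_Nil_iff by metis
  then show "cst u m = cst u m'" by (simp add: cst_def)
qed

lemma irreducible_generic:
  fixes R :: "series ring"
  assumes c: "composition \<alpha>"
    and mult: "monoid.mult R = Kmult" and one: "one R = Kone" and zero: "zero R = (\<lambda>_. 0)"
    and carr: "\<And>f. f \<in> carrier R \<Longrightarrow> bounded_degree f"
    and cst_in: "\<And>u. cst u \<in> carrier R"
  shows "ring_irreducible\<^bsub>R\<^esub> (L_qs \<alpha>)"
proof -
  define L where "L = L_qs \<alpha>"
  have Lnz: "L \<noteq> (\<lambda>_. 0)"
  proof
    assume L0: "L = (\<lambda>_. 0)"
    have "Lp \<alpha> (Poly_Mapping.single 0 (sum_list \<alpha>) + 0)"
      using Lp_cons_top[OF c, of 0 0] by simp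
    then have "L (Poly_Mapping.single 0 (sum_list \<alpha>)) = 1" unfolding L_def by (simp add: L_qs_eq)
    then show False using L0 by simp
  qed
  have notunit: "L \<notin> Units R"
  proof
    assume "L \<in> Units R"
    then obtain x where "x \<in> carrier R" "x \<otimes>\<^bsub>R\<^esub> L = \<one>\<^bsub>R\<^esub>" unfolding Units_def by blast
    then have "Kmult x L = Kone" using mult one by simp
    then have "Kmult x L 0 = Kone 0" by simp
    then show False unfolding Kmult_at0 L_def L_at0 Kone_def by simp
  qed
  have fac: "b \<in> Units R" if b: "b \<in> carrier R" and pf: "properfactor R b L" for b
  proof -
    obtain cc where cc: "cc \<in> carrier R" "L = b \<otimes>\<^bsub>R\<^esub> cc"
      using pf unfolding properfactor_def factor_def by blast
    have nf: "\<not> (\<exists>c\<in>carrier R. b = L \<otimes>\<^bsub>R\<^esub> c)"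
      using pf unfolding properfactor_def factor_def by blast
    have prod: "Kmult b cc = L_qs \<alpha>" using cc mult unfolding L_def by simp
    from core[OF c carr[OF b] carr[OF cc(1)] prod]
    show ?thesis
    proof
      assume "\<exists>u. (u = 1 \<or> u = -1) \<and> b = cst u"
      then obtain u where u: "u = 1 \<or> u = -1" "b = cst u" by blast
      have "Kmult (cst u) (cst u) = Kone"
      proof
        fix m show "Kmult (cst u) (cst u) m = Kone m"
          using u(1) unfolding Kmult_cst_right by (auto simp: cst_def Kone_def)
      qed
      then have "cst u \<otimes>\<^bsub>R\<^esub> b = \<one>\<^bsub>R\<^esub> \<and> b \<otimes>\<^bsub>R\<^esub> cst u = \<one>\<^bsub>R\<^esub>"
        using u(2) mult one by simp
      then show "b \<in> Units R" unfolding Units_def using b cst_in by blast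
    next
      assume "\<exists>u. (u = 1 \<or> u = -1) \<and> cc = cst u"
      then obtain u where u: "u = 1 \<or> u = -1" "cc = cst u" by blast
      have "L = Kmult b (cst u)" using prod u(2) unfolding L_def by simp
      then have Lb: "L = (\<lambda>m. b m * u)" by (simp only: Kmult_cst_right)
      have "Kmult L (cst u) = b"
      proof
        fix m show "Kmult L (cst u) m = b m"
          unfolding Kmult_cst_right Lb using u(1) by auto
      qed
      then have "b = L \<otimes>\<^bsub>R\<^esub> cst u" using mult by simp
      then show "b \<in> Units R" using nf cst_in by blast
    qed
  qed
  show ?thesis
    unfolding ring_irreducible_def Divisibility.irreducible_def
    using Lnz notunit fac zero unfolding L_def by auto
qed

theorem proposition8p11:
  assumes "composition \<alpha>"
  shows "L_qs \<alpha> \<in> carrier QSym_ring \<and> ring_irreducible\<^bsub>QSym_ring\<^esub> (L_qs \<alpha>)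
       \<and> L_qs \<alpha> \<in> carrier K_ring \<and> ring_irreducible\<^bsub>K_ring\<^esub> (L_qs \<alpha>)"
proof (intro conjI)
  show "L_qs \<alpha> \<in> carrier QSym_ring"
    using L_quasi by (simp add: QSym_ring_def K_ring_def)
  show "L_qs \<alpha> \<in> carrier K_ring"
    using L_quasi unfolding quasi_symmetric_def by (simp add: K_ring_def)
  show "ring_irreducible\<^bsub>QSym_ring\<^esub> (L_qs \<alpha>)"
  proof (rule irreducible_generic[OF assms])
    show "\<And>f. f \<in> carrier QSym_ring \<Longrightarrow> bounded_degree f"
      by (simp add: QSym_ring_def K_ring_def quasi_symmetric_def)
    show "\<And>u. cst u \<in> carrier QSym_ring"
      using cst_quasi by (simp add: QSym_ring_def K_ring_def)
  qed (simp_all add: QSym_ring_def K_ring_def)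
  show "ring_irreducible\<^bsub>K_ring\<^esub> (L_qs \<alpha>)"
  proof (rule irreducible_generic[OF assms])
    show "\<And>f. f \<in> carrier K_ring \<Longrightarrow> bounded_degree f"
      by (simp add: K_ring_def)
    show "\<And>u. cst u \<in> carrier K_ring"
      using cst_quasi unfolding quasi_symmetric_def by (simp add: K_ring_def)
  qed (simp_all add: K_ring_def)
qed

end
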